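(* Let $\alpha_i,\beta_i,\gamma_i$ ($i=1,2,3$) be real numbers such that $$\operatorname{Rank}\begin{pmatrix}\alpha_1&\beta_1&\gamma_1&0&0&0\\ \alpha_2&\beta_2&\gamma_2&0&0&0\\ 0&0&0&\alpha_3&\beta_3&\gamma_3\end{pmatrix}=3,$$ and let $B_1[u]=\alpha_1u(0)+\beta_1u'(0)+\gamma_1u''(0)$, $B_2[u]=\alpha_2u(0)+\beta_2u'(0)+\gamma_2u''(0)$, $B_3[u]=\alpha_3u(1)+\beta_3u'(1)+\gamma_3u''(1)$. Assume the problem $u'''=\varphi$ on $(0,1)$, $B_1[u]=B_2[u]=B_3[u]=0$ has a Green function $G(t,s)$, and set $G_1=\partial G/\partial t$, $G_2=\partial^2 G/\partial t^2$, $$M_0=\max_{0\le t\le1}\int_0^1|G(t,s)|ds,\quad M_1=\max_{0\le t\le1}\int_0^1|G_1(t,s)|ds,\quad M_2=\max_{0\le t\le1}\int_0^1|G_2(t,s)|ds.$$ For $M>0$ let $\mathcal{D}_M=\{(t,x,y,z): 0\le t\le1,\ |x|\le M_0M,\ |y|\le M_1M,\ |z|\le M_2M\}$. Suppose there exists $M>0$ such that the function $f(t,x,y,z)$ is continuous in $\mathcal{D}_M$ and $|f(t,x,y,z)|\le M$ for all $(t,x,y,z)\in\mathcal{D}_M$. Then the problem $$u'''(t)=f(t,u(t),u'(t),u''(t)),\ 0<t<1,\qquad B_1[u]=B_2[u]=B_3[u]=0$$ has a solution $u$ satisfying $|u(t)|\le M_0M$, $|u'(t)|\le M_1M$, $|u''(t)|\le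 M_2M$ for all $0\le t\le 1$.
   Context: The Green function $G(t,s)$ of the linear problem $u'''=\varphi$, $B_1[u]=B_2[u]=B_3[u]=0$ is the function on $[0,1]^2$ such that for every $\varphi\in C[0,1]$ the unique solution of this linear problem is $u(t)=\int_0^1G(t,s)\varphi(s)\,ds$; then $u'(t)=\int_0^1G_1(t,s)\varphi(s)ds$, $u''(t)=\int_0^1G_2(t,s)\varphi(s)ds$, where $G_1$ is continuous on $[0,1]^2$ and $G_2$ is continuous on $[0,1]^2$ except on the line $t=s$. *)

theory Defs
  imports "HOL-Analysis.Analysis"
begin

text \<open>Rows of the 3x6 boundary coefficient matrix. Column indices of type 6 are 0,...,5.\<close>
definition rowL :: "real \<Rightarrow> real \<Rightarrow> real \<Rightarrow> 6 \<Rightarrow> real" where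
  "rowL a b c j = (if j = 0 then a else if j = 1 then b else if j = 2 then c else 0)"

definition rowR :: "real \<Rightarrow> real \<Rightarrow> real \<Rightarrow> 6 \<Rightarrow> real" where
  "rowR a b c j = (if j = 3 then a else if j = 4 then b else if j = 5 then c else 0)"

definition bc_matrix ::
  "real \<Rightarrow> real \<Rightarrow> real \<Rightarrow> real \<Rightarrow> real \<Rightarrow> real \<Rightarrow> real \<Rightarrow> real \<Rightarrow> real \<Rightarrow> real^6^3" where
  "bc_matrix a1 b1 c1 a2 b2 c2 a3 b3 c3 =
     (\<chi> i j. if i = 0 then rowL a1 b1 c1 j
             else if i = 1 then rowL a2 b2 c2 j
             else rowR a3 b3 c3 j)"

definition bvp_sol ::
  "real \<Rightarrow> real \<Rightarrow> real \<Rightarrow> real \<Rightarrow> real \<Rightarrow> real \<Rightarrow> real \<Rightarrow> real \<Rightarrow> real \<Rightarrow>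
   (real \<Rightarrow> real) \<Rightarrow> (real \<Rightarrow> real) \<Rightarrow> (real \<Rightarrow> real) \<Rightarrow> (real \<Rightarrow> real) \<Rightarrow> bool" where
  "bvp_sol a1 b1 c1 a2 b2 c2 a3 b3 c3 h u u1 u2 \<longleftrightarrow>
     (\<forall>t\<in>{0..1}. (u has_real_derivative u1 t) (at t within {0..1})) \<and>
     (\<forall>t\<in>{0..1}. (u1 has_real_derivative u2 t) (at t within {0..1})) \<and>
     continuous_on {0..1} u2 \<and>
     (\<forall>t\<in>{0<..<1}. (u2 has_real_derivative h t) (at t)) \<and>
     a1 * u 0 + b1 * u1 0 + c1 * u2 0 = 0 \<and>
     a2 * u 0 + b2 * u1 0 + c2 * u2 0 = 0 \<and>
     a3 * u 1 + b3 * u1 1 + c3 * u2 1 = 0"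

definition green_function ::
  "real \<Rightarrow> real \<Rightarrow> real \<Rightarrow> real \<Rightarrow> real \<Rightarrow> real \<Rightarrow> real \<Rightarrow> real \<Rightarrow> real \<Rightarrow>
   (real \<Rightarrow> real \<Rightarrow> real) \<Rightarrow> (real \<Rightarrow> real \<Rightarrow> real) \<Rightarrow> (real \<Rightarrow> real \<Rightarrow> real) \<Rightarrow> bool" where
  "green_function a1 b1 c1 a2 b2 c2 a3 b3 c3 G G1 G2 \<longleftrightarrow>
     continuous_on ({0..1} \<times> {0..1}) (\<lambda>(t,s). G t s) \<and>
     continuous_on ({0..1} \<times> {0..1}) (\<lambda>(t,s). G1 t s) \<and>
     continuous_on ({0..1} \<times> {0..1} - {p. fst p = snd p}) (\<lambda>(t,s). G2 t s) \<and>
     (\<forall>s\<in>{0..1}. \<forall>t\<in>{0..1}. ((\<lambda>t. G t s) has_real_derivative G1 t s) (at t within {0..1})) \<and>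
     (\<forall>s\<in>{0..1}. \<forall>t\<in>{0..1}. t \<noteq> s \<longrightarrow>
        ((\<lambda>t. G1 t s) has_real_derivative G2 t s) (at t within {0..1})) \<and>
     (\<forall>\<phi>. continuous_on {0..1} \<phi> \<longrightarrow>
        bvp_sol a1 b1 c1 a2 b2 c2 a3 b3 c3 \<phi>
          (\<lambda>t. integral {0..1} (\<lambda>s. G t s * \<phi> s))
          (\<lambda>t. integral {0..1} (\<lambda>s. G1 t s * \<phi> s))
          (\<lambda>t. integral {0..1} (\<lambda>s. G2 t s * \<phi> s)) \<and>
        (\<forall>u u1 u2. bvp_sol a1 b1 c1 a2 b2 c2 a3 b3 c3 \<phi> u u1 u2 \<longrightarrow>
           (\<forall>t\<in>{0..1}. u t = integral {0..1} (\<lambda>s. G t s * \<phi> s))))"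

end

theory Submission
  imports Defs "HOL-Homology.Homology" "HOL-Complex_Analysis.Great_Picard"
begin

definition ballN :: "nat \<Rightarrow> (nat \<Rightarrow> real) set" where
  "ballN n = {x. (\<forall>i>n. x i = 0) \<and> (\<Sum>i\<le>n. (x i)^2) \<le> 1}"

definition sphN :: "nat \<Rightarrow> (nat \<Rightarrow> real) set" where
  "sphN n = {x. (\<Sum>i\<le>n. (x i)^2) = 1 \<and> (\<forall>i>n. x i = 0)}"

lemma nsphere_sphN: "nsphere n = subtopology (powertop_real UNIV) (sphN n)"
  by (simp add: nsphere sphN_def)

lemma sphN_ballN: "sphN n \<subseteq> ballN n"
  by (auto simp: sphN_def ballN_def)

lemma normalize_sphN:
  fixes y :: "nat \<Rightarrow> real"
  assumes "\<forall>i>n. y i = 0" "(\<Sum>i\<le>n. (y i)^2) \<noteq> 0"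
  shows "(\<lambda>i. y i / sqrt (\<Sum>k\<le>n. (y k)^2)) \<in> sphN n"
proof -
  let ?S = "\<Sum>k\<le>n. (y k)^2"
  have S0: "?S > 0" using assms(2) by (metis less_eq_real_def sum_nonneg zero_le_power2)
  have "(\<Sum>i\<le>n. (y i / sqrt ?S)^2) = (\<Sum>i\<le>n. (y i)^2) / ?S"
    using S0 by (simp add: power_divide flip: sum_divide_distrib)
  also have "\<dots> = 1" using S0 by simp
  finally show ?thesis using assms(1) by (simp add: sphN_def)
qed

lemma sumsq_zero_imp:
  fixes y :: "nat \<Rightarrow> real"
  assumes "(\<Sum>i\<le>n. (y i)^2) = 0" "i \<le> n"
  shows "y i = 0"
proof -
  have "\<forall>i\<in>{..n}. (y i)^2 = 0"
    using assms(1) by (subst sum_nonneg_eq_0_iff[symmetric]) auto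
  then show ?thesis using assms(2) by auto
qed

lemma brouwer_nat:
  fixes g :: "(nat \<Rightarrow> real) \<Rightarrow> (nat \<Rightarrow> real)"
  assumes cont: "\<And>i. continuous_map (subtopology (powertop_real UNIV) (ballN n)) euclideanreal (\<lambda>x. g x i)"
    and maps: "\<And>x. x \<in> ballN n \<Longrightarrow> g x \<in> ballN n"
  shows "\<exists>x\<in>ballN n. g x = x"
proof (rule ccontr)
  assume nofix: "\<not> (\<exists>x\<in>ballN n. g x = x)"
  define nr where "nr = (\<lambda>y::nat\<Rightarrow>real. sqrt (\<Sum>k\<le>n. (y k)^2))"
  define d where "d = (\<lambda>(s::real, x::nat\<Rightarrow>real). (\<lambda>i. x i - s * g x i))"
  define H where "H = (\<lambda>p. (\<lambda>i. d p i / nr (d p)))"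
  define R where "R = (\<lambda>y::nat\<Rightarrow>real. (\<lambda>i. (y i - g y i) / nr (\<lambda>k. y k - g y k)))"
  define h2 where "h2 = (\<lambda>(s::real, x::nat\<Rightarrow>real). R (\<lambda>i. (1 - s) * x i))"
  let ?P = "powertop_real UNIV"
  have d_out: "d (s, x) i = 0" if "x \<in> ballN n" "i > n" for s x i
    using that maps[OF that(1)] by (auto simp: d_def ballN_def)
  have d_nz: "(\<Sum>k\<le>n. (d (s, x) k)^2) \<noteq> 0" if x: "x \<in> sphN n" and s: "s \<in> {0..1}" for s x
  proof
    assume z: "(\<Sum>k\<le>n. (d (s, x) k)^2) = 0"
    have xb: "x \<in> ballN n" using x sphN_ballN by auto
    have eq: "x i = s * g x i" if "i \<le> n" for i
      using sumsq_zero_imp[OF z that] by (simp add: d_def)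
    have "1 = (\<Sum>i\<le>n. (x i)^2)" using x by (simp add: sphN_def)
    also have "\<dots> = (\<Sum>i\<le>n. s^2 * (g x i)^2)"
      by (rule sum.cong) (auto simp: eq power_mult_distrib)
    also have "\<dots> = s^2 * (\<Sum>i\<le>n. (g x i)^2)" by (simp add: sum_distrib_left)
    also have "\<dots> \<le> s^2 * 1"
      using maps[OF xb] by (intro mult_left_mono) (auto simp: ballN_def)
    finally have "1 \<le> s^2" by simp
    moreover have "s^2 \<le> 1" using s by (simp add: power_le_one)
    ultimately have "s^2 = 1" by simp
    then have s1: "s = 1" using s by (simp add: power2_eq_1_iff) 
    have "g x = x"
    proof
      fix i show "g x i = x i"
      proof (cases "i \<le> n")
        case True then show ?thesis using eq[OF True] s1 by simp
      next
        case False then show ?thesis using maps[OF xb] xb by (auto simp: ballN_def)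
      qed
    qed
    then show False using nofix xb by auto
  qed
  have R_nz: "(\<Sum>k\<le>n. (y k - g y k)^2) \<noteq> 0" if y: "y \<in> ballN n" for y
  proof
    assume z: "(\<Sum>k\<le>n. (y k - g y k)^2) = 0"
    have "g y = y"
    proof
      fix i show "g y i = y i"
      proof (cases "i \<le> n")
        case True then show ?thesis using sumsq_zero_imp[OF z True] by simp
      next
        case False then show ?thesis using maps[OF y] y by (auto simp: ballN_def)
      qed
    qed
    then show False using nofix y by auto
  qed
  have R_sph: "R y \<in> sphN n" if y: "y \<in> ballN n" for y
    unfolding R_def nr_def
    by (rule normalize_sphN) (use y maps[OF y] R_nz[OF y] in \<open>auto simp: ballN_def\<close>)
  have H_sph: "H (s, x) \<in> sphN n" if x: "x \<in> sphN n" and s: "s \<in> {0..1}" for s x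
    unfolding H_def nr_def
  proof (rule normalize_sphN)
    have "x \<in> ballN n" using x sphN_ballN by auto
    then show "\<forall>i>n. d (s, x) i = 0" using d_out by auto
  qed (use d_nz[OF x s] in auto)
  have gcont_sph: "continuous_map (subtopology ?P (sphN n)) euclideanreal (\<lambda>x. g x i)" for i
    by (rule continuous_map_from_subtopology_mono[OF cont sphN_ballN])
  have hom1: "homotopic_with (\<lambda>_. True) (nsphere n) (nsphere n) id (\<lambda>x. H (1, x))"
    unfolding nsphere_sphN
  proof (subst homotopic_with, simp, intro exI conjI ballI)
    let ?X = "prod_topology (top_of_set {0..1::real}) (subtopology ?P (sphN n))"
    have c_snd: "continuous_map ?X euclideanreal (\<lambda>p. snd p i)" for i
      by (rule continuous_map_compose[OF continuous_map_snd, unfolded o_def])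
         (rule continuous_map_from_subtopology, rule continuous_map_product_projection, simp)
    have c_fst: "continuous_map ?X euclideanreal (\<lambda>p. fst p)"
      by (rule continuous_map_compose[OF continuous_map_fst, unfolded o_def])
         (simp add: continuous_map_into_fulltopology)
    have c_g: "continuous_map ?X euclideanreal (\<lambda>p. g (snd p) i)" for i
      by (rule continuous_map_compose[OF continuous_map_snd gcont_sph, unfolded o_def])
    have c_d: "continuous_map ?X euclideanreal (\<lambda>p. d p i)" for i
    proof -
      have "continuous_map ?X euclideanreal (\<lambda>p. snd p i - fst p * g (snd p) i)"
        by (intro continuous_map_diff continuous_map_real_mult c_snd c_fst c_g)
      then show ?thesis by (simp add: d_def case_prod_beta)
    qed
    have topX: "topspace ?X = {0..1} \<times> sphN n" by simp
    show "continuous_map ?X (subtopology ?P (sphN n)) H"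
    proof (subst continuous_map_in_subtopology, intro conjI)
      show "continuous_map ?X ?P H"
        unfolding continuous_map_componentwise_UNIV H_def nr_def
      proof (intro allI continuous_map_real_divide continuous_map_sqrt continuous_map_sum c_d finite_atMost continuous_map_real_pow)
        fix x assume "x \<in> topspace ?X"
        then obtain s y where "x = (s, y)" "s \<in> {0..1}" "y \<in> sphN n" by auto
        then show "sqrt (\<Sum>k\<le>n. (d x k)\<^sup>2) \<noteq> 0" using d_nz by simp
      qed
      show "H \<in> topspace ?X \<rightarrow> sphN n" using H_sph by auto
    qed
    show "H (0, x) = id x" if "x \<in> topspace (subtopology ?P (sphN n))" for x
    proof -
      have x: "x \<in> sphN n" using that by simp
      then have "nr (d (0, x)) = 1" by (simp add: nr_def d_def sphN_def)
      then show ?thesis by (simp add: H_def d_def)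
    qed
    show "H (1, x) = H (1, x)" for x by simp
  qed simp
  have hom2: "homotopic_with (\<lambda>_. True) (nsphere n) (nsphere n) (\<lambda>x. H (1, x)) (\<lambda>x. R (\<lambda>i. 0))"
    unfolding nsphere_sphN
  proof (subst homotopic_with, simp, intro exI conjI ballI)
    let ?X = "prod_topology (top_of_set {0..1::real}) (subtopology ?P (sphN n))"
    define m where "m = (\<lambda>p::real \<times> (nat \<Rightarrow> real). (\<lambda>i. (1 - fst p) * snd p i))"
    have c_snd: "continuous_map ?X euclideanreal (\<lambda>p. snd p i)" for i
      by (rule continuous_map_compose[OF continuous_map_snd, unfolded o_def])
         (rule continuous_map_from_subtopology, rule continuous_map_product_projection, simp)
    have c_fst: "continuous_map ?X euclideanreal (\<lambda>p. fst p)"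
      by (rule continuous_map_compose[OF continuous_map_fst, unfolded o_def])
         (simp add: continuous_map_into_fulltopology)
    have m_ball0: "m (s, y) \<in> ballN n" if p: "s \<in> {0..1}" "y \<in> sphN n" for s y
    proof -
      have "(\<Sum>i\<le>n. ((1 - s) * y i)^2) = (1 - s)^2 * (\<Sum>i\<le>n. (y i)^2)"
        by (simp add: power_mult_distrib sum_distrib_left)
      also have "\<dots> = (1-s)^2" using p by (simp add: sphN_def)
      also have "\<dots> \<le> 1" using p by (simp add: power_le_one)
      finally show ?thesis using p by (simp add: m_def ballN_def sphN_def)
    qed
    have m_ball: "m p \<in> ballN n" if "p \<in> topspace ?X" for p
      using that m_ball0 by (cases p) auto
    have c_m: "continuous_map ?X (subtopology ?P (ballN n)) m"
    proof (subst continuous_map_in_subtopology, intro conjI)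
      show "continuous_map ?X ?P m"
        unfolding continuous_map_componentwise_UNIV m_def
        by (intro allI continuous_map_real_mult continuous_map_diff c_snd c_fst continuous_map_canonical_const)
      show "m \<in> topspace ?X \<rightarrow> ballN n" using m_ball by auto
    qed
    have c_gm: "continuous_map ?X euclideanreal (\<lambda>p. g (m p) i)" for i
      by (rule continuous_map_compose[OF c_m cont, unfolded o_def])
    have c_mi: "continuous_map ?X euclideanreal (\<lambda>p. m p i)" for i
      unfolding m_def by (intro continuous_map_real_mult continuous_map_diff c_snd c_fst continuous_map_canonical_const)
    have h2eq: "h2 = (\<lambda>p. R (m p))" by (auto simp: h2_def m_def)
    show "continuous_map ?X (subtopology ?P (sphN n)) h2"
    proof (subst continuous_map_in_subtopology, intro conjI)
      show "continuous_map ?X ?P h2"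
        unfolding continuous_map_componentwise_UNIV h2eq R_def nr_def
      proof (intro allI continuous_map_real_divide continuous_map_sqrt continuous_map_sum continuous_map_diff c_mi c_gm finite_atMost continuous_map_real_pow)
        fix x assume "x \<in> topspace ?X"
        then show "sqrt (\<Sum>k\<le>n. (m x k - g (m x) k)\<^sup>2) \<noteq> 0" using R_nz m_ball by simp
      qed
      show "h2 \<in> topspace ?X \<rightarrow> sphN n" using R_sph m_ball by (auto simp: h2eq)
    qed
    show "h2 (0, x) = H (1, x)" for x by (simp add: h2_def H_def R_def d_def)
    show "h2 (1, x) = R (\<lambda>i. 0)" for x by (simp add: h2_def)
  qed simp
  have "homotopic_with (\<lambda>_. True) (nsphere n) (nsphere n) id (\<lambda>x. R (\<lambda>i. 0))"
    by (rule homotopic_with_trans[OF hom1 hom2])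
  then have "contractible_space (nsphere n)"
    unfolding contractible_space_def by blast
  then show False using non_contractible_space_nsphere by blast
qed

definition Hq :: "real \<Rightarrow> real" where "Hq x = (max 0 x)^2 / 2"

lemma Hq_cont[continuous_intros]: "continuous_on S f \<Longrightarrow> continuous_on S (\<lambda>x. Hq (f x))"
  unfolding Hq_def by (intro continuous_intros) auto

lemma deriv_unique01:
  assumes "t \<in> {0..1::real}" "(f has_real_derivative a) (at t within {0..1})"
    "(f has_real_derivative b) (at t within {0..1})"
  shows "a = b"
  using vector_derivative_unique_within_closed_interval[of 0 1 t f a b] assms
  by (simp add: has_real_derivative_iff_has_vector_derivative)

lemma W_formula:
  fixes \<phi> :: "real \<Rightarrow> real"
  assumes phi: "continuous_on {0..1} \<phi>" and t: "t \<in> {0..1}"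
  shows "integral {0..1} (\<lambda>s. Hq (t - s) * \<phi> s) =
     t^2/2 * integral {0..t} \<phi> - t * integral {0..t} (\<lambda>s. s * \<phi> s) + integral {0..t} (\<lambda>s. s^2 * \<phi> s) / 2"
proof -
  let ?f = "\<lambda>s. Hq (t - s) * \<phi> s"
  have cf: "continuous_on {0..1} ?f" by (intro continuous_intros phi)
  have sub: "{0..t} \<subseteq> {0..1}" using t by auto
  have c0: "continuous_on {0..t} \<phi>" using phi sub continuous_on_subset by blast
  have c1: "continuous_on {0..t} (\<lambda>s. s * \<phi> s)" by (intro continuous_intros c0)
  have c2: "continuous_on {0..t} (\<lambda>s. s^2 * \<phi> s)" by (intro continuous_intros c0)
  have i0: "(\<phi> has_integral integral {0..t} \<phi>) {0..t}"
    using integrable_continuous_interval[OF c0] by (rule integrable_integral)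
  have i1: "((\<lambda>s. s * \<phi> s) has_integral integral {0..t} (\<lambda>s. s * \<phi> s)) {0..t}"
    using integrable_continuous_interval[OF c1] by (rule integrable_integral)
  have i2: "((\<lambda>s. s^2 * \<phi> s) has_integral integral {0..t} (\<lambda>s. s^2 * \<phi> s)) {0..t}"
    using integrable_continuous_interval[OF c2] by (rule integrable_integral)
  have "((\<lambda>s. t^2/2 * \<phi> s - t * (s * \<phi> s) + (s^2 * \<phi> s) / 2) has_integral
     (t^2/2 * integral {0..t} \<phi> - t * integral {0..t} (\<lambda>s. s * \<phi> s) + integral {0..t} (\<lambda>s. s^2 * \<phi> s) / 2)) {0..t}"
    by (intro has_integral_add has_integral_diff has_integral_mult_right has_integral_divide i0 i1 i2)
  moreover have "?f s = t^2/2 * \<phi> s - t * (s * \<phi> s) + (s^2 * \<phi> s) / 2" if "s \<in> {0..t}" for s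
    using that by (simp add: Hq_def max_def power2_eq_square field_simps)
  ultimately have A: "integral {0..t} ?f = t^2/2 * integral {0..t} \<phi> - t * integral {0..t} (\<lambda>s. s * \<phi> s) + integral {0..t} (\<lambda>s. s^2 * \<phi> s) / 2"
    by (metis (no_types, lifting) has_integral_cong integral_unique)
  have B: "integral {t..1} ?f = 0"
    by (rule integral_unique, rule has_integral_is_0) (auto simp: Hq_def)
  have "integral {0..t} ?f + integral {t..1} ?f = integral {0..1} ?f"
    using t by (intro Henstock_Kurzweil_Integration.integral_combine integrable_continuous_interval cf) auto
  then show ?thesis using A B by simp
qed

lemma quad_rep:
  fixes \<phi> u u1 u2 :: "real \<Rightarrow> real"
  assumes phi: "continuous_on {0..1} \<phi>"
    and sol: "bvp_sol a1 b1 c1 a2 b2 c2 a3 b3 c3 \<phi> u u1 u2"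
  shows "\<exists>k0 k1 k2. \<forall>t\<in>{0..1}. u t = integral {0..1} (\<lambda>s. Hq (t - s) * \<phi> s) + k0 + k1 * t + k2 * t^2"
proof -
  from sol have du: "\<And>t. t \<in> {0..1} \<Longrightarrow> (u has_real_derivative u1 t) (at t within {0..1})"
    and du1: "\<And>t. t \<in> {0..1} \<Longrightarrow> (u1 has_real_derivative u2 t) (at t within {0..1})"
    and cu2: "continuous_on {0..1} u2"
    and du2: "\<And>t. t \<in> {0<..<1} \<Longrightarrow> (u2 has_real_derivative \<phi> t) (at t)"
    unfolding bvp_sol_def by auto
  define I0 where "I0 = (\<lambda>t. integral {0..t} \<phi>)"
  define I1 where "I1 = (\<lambda>t. integral {0..t} (\<lambda>s. s * \<phi> s))"
  define I2 where "I2 = (\<lambda>t. integral {0..t} (\<lambda>s. s^2 * \<phi> s))"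
  have dI0: "(I0 has_real_derivative \<phi> t) (at t within {0..1})" if "t \<in> {0..1}" for t
    unfolding I0_def by (rule integral_has_real_derivative[OF phi that])
  have dI1: "(I1 has_real_derivative t * \<phi> t) (at t within {0..1})" if "t \<in> {0..1}" for t
    unfolding I1_def by (rule integral_has_real_derivative[OF _ that]) (intro continuous_intros phi)
  have dI2: "(I2 has_real_derivative t^2 * \<phi> t) (at t within {0..1})" if "t \<in> {0..1}" for t
    unfolding I2_def by (rule integral_has_real_derivative[OF _ that]) (intro continuous_intros phi)
  define w where "w = (\<lambda>t. t^2/2 * I0 t - t * I1 t + I2 t / 2)"
  define w1 where "w1 = (\<lambda>t. t * I0 t - I1 t)"
  have dw: "(w has_real_derivative w1 t) (at t within {0..1})" if t: "t \<in> {0..1}" for t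
  proof -
    have "(w has_real_derivative (2*t/2 * I0 t + t^2/2 * \<phi> t - (I1 t + t * (t * \<phi> t)) + (t^2 * \<phi> t)/2)) (at t within {0..1})"
      unfolding w_def
      by (rule derivative_eq_intros dI0[OF t] dI1[OF t] dI2[OF t] refl | simp)+
    moreover have "2*t/2 * I0 t + t^2/2 * \<phi> t - (I1 t + t * (t * \<phi> t)) + (t^2 * \<phi> t)/2 = w1 t"
      by (simp add: w1_def power2_eq_square algebra_simps)
    ultimately show ?thesis by simp
  qed
  have dw1: "(w1 has_real_derivative I0 t) (at t within {0..1})" if t: "t \<in> {0..1}" for t
  proof -
    have "(w1 has_real_derivative (I0 t + t * \<phi> t - t * \<phi> t)) (at t within {0..1})"
      unfolding w1_def
      by (rule derivative_eq_intros dI0[OF t] dI1[OF t] refl | simp)+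
    then show ?thesis by simp
  qed
  have cI0: "continuous_on {0..1} I0"
    using dI0 by (rule DERIV_continuous_on)
  have "(\<lambda>t. u2 t - I0 t) t = (\<lambda>t. u2 t - I0 t) 0" if t: "t \<in> {0..1}" for t
  proof (rule DERIV_isconst2[of 0 1])
    show "continuous_on {0..1} (\<lambda>t. u2 t - I0 t)" by (intro continuous_intros cu2 cI0)
    fix x :: real assume x: "0 < x" "x < 1"
    have "(I0 has_real_derivative \<phi> x) (at x)"
      using dI0[of x] x by (simp add: at_within_Icc_at)
    then show "((\<lambda>t. u2 t - I0 t) has_real_derivative 0) (at x)"
      using du2[of x] x by (auto intro!: derivative_eq_intros)
  qed (use t in auto)
  note E2 = this
  define C2 where "C2 = u2 0 - I0 0"
  have C2: "u2 t = I0 t + C2" if "t \<in> {0..1}" for t using E2[OF that] by (simp add: C2_def)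
  have "\<exists>c. \<forall>t\<in>{0..1}. u1 t - w1 t - C2 * t = c"
  proof (rule has_field_derivative_zero_constant)
    fix t :: real assume t: "t \<in> {0..1}"
    have "((\<lambda>t. u1 t - w1 t - C2 * t) has_real_derivative (u2 t - I0 t - C2 * 1)) (at t within {0..1})"
      by (rule derivative_eq_intros du1[OF t] dw1[OF t] refl | simp)+
    then show "((\<lambda>t. u1 t - w1 t - C2 * t) has_real_derivative 0) (at t within {0..1})"
      using C2[OF t] by simp
  qed simp
  then obtain C1 where "\<And>t. t \<in> {0..1} \<Longrightarrow> u1 t - w1 t - C2 * t = C1" by blast
  note E1 = this
  have C1: "u1 t = w1 t + C2 * t + C1" if "t \<in> {0..1}" for t using E1[OF that] by linarith
  have "\<exists>c. \<forall>t\<in>{0..1}. u t - w t - C1 * t - C2/2 * t^2 = c"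
  proof (rule has_field_derivative_zero_constant)
    fix t :: real assume t: "t \<in> {0..1}"
    have "((\<lambda>t. u t - w t - C1 * t - C2/2 * t^2) has_real_derivative (u1 t - w1 t - C1 * 1 - C2/2 * (of_nat 2 * t ^ (2 - 1)))) (at t within {0..1})"
      by (rule derivative_eq_intros du[OF t] dw[OF t] refl | simp)+
    then show "((\<lambda>t. u t - w t - C1 * t - C2/2 * t^2) has_real_derivative 0) (at t within {0..1})"
      using C1[OF t] by simp
  qed simp
  then obtain C0 where "\<And>t. t \<in> {0..1} \<Longrightarrow> u t - w t - C1 * t - C2/2 * t^2 = C0" by blast
  note E0 = this
  have C0: "u t = w t + C1 * t + C2/2 * t^2 + C0" if "t \<in> {0..1}" for t using E0[OF that] by linarith
  show ?thesis
  proof (intro exI ballI)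
    fix t :: real assume t: "t \<in> {0..1}"
    have "w t = integral {0..1} (\<lambda>s. Hq (t - s) * \<phi> s)"
      using W_formula[OF phi t] by (simp add: w_def I0_def I1_def I2_def)
    then show "u t = integral {0..1} (\<lambda>s. Hq (t - s) * \<phi> s) + C0 + C1 * t + C2/2 * t^2"
      using C0[OF t] by simp
  qed
qed

definition L0 :: "real \<Rightarrow> real" where "L0 t = (2*t - 1)*(t - 1)"
definition Lh :: "real \<Rightarrow> real" where "Lh t = 4*t*(1 - t)"
definition L1 :: "real \<Rightarrow> real" where "L1 t = t*(2*t - 1)"
definition Aj :: "(real \<Rightarrow> real \<Rightarrow> real) \<Rightarrow> real \<Rightarrow> real \<Rightarrow> real" where
  "Aj G \<tau> s = G \<tau> s - Hq (\<tau> - s)"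
definition Kf :: "(real \<Rightarrow> real \<Rightarrow> real) \<Rightarrow> real \<Rightarrow> real \<Rightarrow> real" where
  "Kf G t s = Hq (t - s) + L0 t * Aj G 0 s + Lh t * Aj G (1/2) s + L1 t * Aj G 1 s"
definition K1 :: "(real \<Rightarrow> real \<Rightarrow> real) \<Rightarrow> real \<Rightarrow> real \<Rightarrow> real" where
  "K1 G t s = max 0 (t - s) + (4*t - 3) * Aj G 0 s + (4 - 8*t) * Aj G (1/2) s + (4*t - 1) * Aj G 1 s"
definition cG :: "(real \<Rightarrow> real \<Rightarrow> real) \<Rightarrow> real \<Rightarrow> real" where
  "cG G s = 4 * Aj G 0 s - 8 * Aj G (1/2) s + 4 * Aj G 1 s"

lemma slice_cont:
  assumes cont: "continuous_on ({0..1} \<times> {0..1}) (\<lambda>(t,s). G t s)" and tau: "\<tau> \<in> {0..1::real}"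
  shows "continuous_on {0..1} (\<lambda>s. G \<tau> s)"
proof -
  have "continuous_on ((\<lambda>s. (\<tau>,s)) ` {0..1}) (\<lambda>(t,s). G t s)"
    using cont by (rule continuous_on_subset) (use tau in auto)
  then have "continuous_on {0..1} ((\<lambda>(t,s). G t s) \<circ> (\<lambda>s. (\<tau>,s)))"
    by (intro continuous_on_compose continuous_intros)
  then show ?thesis by (simp add: o_def)
qed

lemma Aj_cont:
  assumes cont: "continuous_on ({0..1} \<times> {0..1}) (\<lambda>(t,s). G t s)" and tau: "\<tau> \<in> {0..1::real}"
  shows "continuous_on {0..1} (\<lambda>s. Aj G \<tau> s)"
  unfolding Aj_def by (intro continuous_intros slice_cont[OF cont tau])

lemma Kf_cont:
  assumes cont: "continuous_on ({0..1} \<times> {0..1}) (\<lambda>(t,s). G t s)"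
  shows "continuous_on {0..1} (\<lambda>s. Kf G t s)"
  unfolding Kf_def by (intro continuous_intros Aj_cont[OF cont]) auto

lemma cG_cont:
  assumes cont: "continuous_on ({0..1} \<times> {0..1}) (\<lambda>(t,s). G t s)"
  shows "continuous_on {0..1} (cG G)"
  unfolding cG_def by (intro continuous_intros Aj_cont[OF cont]) auto

lemma G_eq_K:
  assumes green: "green_function a1 b1 c1 a2 b2 c2 a3 b3 c3 G G1 G2"
    and t: "t \<in> {0..1}" and s: "s \<in> {0..1}"
  shows "G t s = Kf G t s"
proof -
  have cont: "continuous_on ({0..1} \<times> {0..1}) (\<lambda>(t,s). G t s)"
    using green by (simp add: green_function_def)
  have rep: "\<And>\<phi>. continuous_on {0..1} \<phi> \<Longrightarrow> bvp_sol a1 b1 c1 a2 b2 c2 a3 b3 c3 \<phi>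
          (\<lambda>t. integral {0..1} (\<lambda>s. G t s * \<phi> s))
          (\<lambda>t. integral {0..1} (\<lambda>s. G1 t s * \<phi> s))
          (\<lambda>t. integral {0..1} (\<lambda>s. G2 t s * \<phi> s))"
    using green by (simp add: green_function_def)
  have key: "integral {0..1} (\<lambda>s. G t s * \<phi> s) = integral {0..1} (\<lambda>s. Kf G t s * \<phi> s)"
    if phi: "continuous_on {0..1} \<phi>" for \<phi>
  proof -
    define U where "U = (\<lambda>\<tau>. integral {0..1} (\<lambda>s. G \<tau> s * \<phi> s))"
    define V where "V = (\<lambda>\<tau>. integral {0..1} (\<lambda>s. Hq (\<tau> - s) * \<phi> s))"
    obtain k0 k1 k2 where k: "\<And>\<tau>. \<tau> \<in> {0..1} \<Longrightarrow> U \<tau> = V \<tau> + k0 + k1 * \<tau> + k2 * \<tau>^2"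
      using quad_rep[OF phi rep[OF phi]] unfolding U_def V_def by blast
    have hq: "((\<lambda>s. Hq (\<tau> - s) * \<phi> s) has_integral V \<tau>) {0..1}" for \<tau>
      unfolding V_def by (intro integrable_integral integrable_continuous_interval continuous_intros phi)
    have hg: "((\<lambda>s. G \<tau> s * \<phi> s) has_integral U \<tau>) {0..1}" if "\<tau> \<in> {0..1}" for \<tau>
      unfolding U_def by (intro integrable_integral integrable_continuous_interval continuous_intros phi slice_cont[OF cont that])
    have "((\<lambda>s. Hq (t - s) * \<phi> s + L0 t * (G 0 s * \<phi> s - Hq (0 - s) * \<phi> s)
          + Lh t * (G (1/2) s * \<phi> s - Hq (1/2 - s) * \<phi> s) + L1 t * (G 1 s * \<phi> s - Hq (1 - s) * \<phi> s))
        has_integral (V t + L0 t * (U 0 - V 0) + Lh t * (U (1/2) - V (1/2)) + L1 t * (U 1 - V 1))) {0..1}"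
      by (intro has_integral_add has_integral_mult_right has_integral_diff hq hg) auto
    moreover have "(\<lambda>s. Hq (t - s) * \<phi> s + L0 t * (G 0 s * \<phi> s - Hq (0 - s) * \<phi> s)
          + Lh t * (G (1/2) s * \<phi> s - Hq (1/2 - s) * \<phi> s) + L1 t * (G 1 s * \<phi> s - Hq (1 - s) * \<phi> s))
        = (\<lambda>s. Kf G t s * \<phi> s)"
      by (auto simp: Kf_def Aj_def algebra_simps)
    moreover have "V t + L0 t * (U 0 - V 0) + Lh t * (U (1/2) - V (1/2)) + L1 t * (U 1 - V 1) = U t"
      using k[of 0] k[of "1/2"] k[of 1] k[OF t]
      by (simp add: L0_def Lh_def L1_def power2_eq_square algebra_simps)
    ultimately have "integral {0..1} (\<lambda>s. Kf G t s * \<phi> s) = U t"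
      by (metis integral_unique)
    then show ?thesis by (simp add: U_def)
  qed
  define \<phi> where "\<phi> = (\<lambda>s. G t s - Kf G t s)"
  have cphi: "continuous_on {0..1} \<phi>"
    unfolding \<phi>_def by (intro continuous_intros slice_cont[OF cont t] Kf_cont[OF cont])
  have i1: "(\<lambda>s. G t s * \<phi> s) integrable_on {0..1}"
    by (intro integrable_continuous_interval continuous_intros cphi slice_cont[OF cont t])
  have i2: "(\<lambda>s. Kf G t s * \<phi> s) integrable_on {0..1}"
    by (intro integrable_continuous_interval continuous_intros cphi Kf_cont[OF cont])
  have "integral {0..1} (\<lambda>s. G t s * \<phi> s - Kf G t s * \<phi> s) = 0"
    using integral_diff[OF i1 i2] key[OF cphi] by simp
  moreover have "(\<lambda>s. G t s * \<phi> s - Kf G t s * \<phi> s) = (\<lambda>s. \<phi> s * \<phi> s)"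
    by (auto simp: \<phi>_def algebra_simps)
  ultimately have int0: "((\<lambda>s. \<phi> s * \<phi> s) has_integral 0) {0..1}"
    using integrable_diff[OF i1 i2] by (metis integrable_integral)
  have "\<phi> s * \<phi> s = 0"
    using has_integral_0_cbox_imp_0[of 0 1 "\<lambda>s. \<phi> s * \<phi> s" s] int0 s
      continuous_on_mult[OF cphi cphi]
    by simp
  then show ?thesis by (simp add: \<phi>_def)
qed

lemma Hq_deriv:
  assumes "x \<noteq> 0"
  shows "(Hq has_real_derivative max 0 x) (at x)"
proof (cases "x > 0")
  case True
  have "((\<lambda>y. y^2/2) has_real_derivative x) (at x)"
    by (rule derivative_eq_intros refl | simp)+
  then have d: "((\<lambda>y. y^2/2) has_real_derivative max 0 x) (at x)" using True by simp
  show ?thesis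
    by (rule has_field_derivative_transform_within_open[OF d, of "{0<..}"]) (use True in \<open>auto simp: Hq_def\<close>)
next
  case False
  then have x: "x < 0" using assms by simp
  have d: "((\<lambda>y. 0) has_real_derivative max 0 x) (at x)" using x by simp
  show ?thesis
    by (rule has_field_derivative_transform_within_open[OF d, of "{..<0}"]) (use x in \<open>auto simp: Hq_def\<close>)
qed

lemma max0_deriv:
  assumes "x \<noteq> (0::real)"
  shows "((\<lambda>y. max 0 y) has_real_derivative (if x > 0 then 1 else 0)) (at x)"
proof (cases "x > 0")
  case True
  have d: "((\<lambda>y. y) has_real_derivative (if x > 0 then 1 else 0)) (at x)" using True by simp
  show ?thesis
    by (rule has_field_derivative_transform_within_open[OF d, of "{0<..}"]) (use True in auto)
next
  case False
  then have x: "x < 0" using assms by simp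
  have d: "((\<lambda>y. 0) has_real_derivative (if x > 0 then 1 else 0)) (at x)" using x by simp
  show ?thesis
    by (rule has_field_derivative_transform_within_open[OF d, of "{..<0}"]) (use x in auto)
qed

lemma Kf_deriv:
  assumes "t \<noteq> s"
  shows "((\<lambda>\<tau>. Kf G \<tau> s) has_real_derivative K1 G t s) (at t)"
proof -
  have h: "((\<lambda>\<tau>. Hq (\<tau> - s)) has_real_derivative max 0 (t - s) * 1) (at t)"
    by (rule DERIV_chain2[OF Hq_deriv]) (use assms in \<open>auto intro!: derivative_eq_intros\<close>)
  have "((\<lambda>\<tau>. Kf G \<tau> s) has_real_derivative
      (max 0 (t - s) * 1 + ((2*1)*(t-1) + (2*t-1)*1) * Aj G 0 s + ((4*1)*(1-t) + (4*t)*(-1)) * Aj G (1/2) s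
        + (1*(2*t-1) + t*(2*1)) * Aj G 1 s)) (at t)"
    unfolding Kf_def L0_def Lh_def L1_def
    by (rule derivative_eq_intros h refl | simp)+
  moreover have "max 0 (t - s) * 1 + ((2*1)*(t-1) + (2*t-1)*1) * Aj G 0 s + ((4*1)*(1-t) + (4*t)*(-1)) * Aj G (1/2) s
        + (1*(2*t-1) + t*(2*1)) * Aj G 1 s = K1 G t s"
    by (simp add: K1_def algebra_simps)
  ultimately show ?thesis by simp
qed

lemma K1_deriv:
  assumes "t \<noteq> s"
  shows "((\<lambda>\<tau>. K1 G \<tau> s) has_real_derivative ((if s < t then 1 else 0) + cG G s)) (at t)"
proof -
  have h: "((\<lambda>\<tau>. max 0 (\<tau> - s)) has_real_derivative (if t - s > 0 then 1 else 0) * 1) (at t)"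
    by (rule DERIV_chain2[OF max0_deriv, where g="\<lambda>\<tau>. \<tau> - s"]) (use assms in \<open>auto intro!: derivative_eq_intros\<close>)
  have "((\<lambda>\<tau>. K1 G \<tau> s) has_real_derivative
      ((if t - s > 0 then 1 else 0) * 1 + (4*1) * Aj G 0 s + (-(8*1)) * Aj G (1/2) s + (4*1) * Aj G 1 s)) (at t)"
    unfolding K1_def
    by (rule derivative_eq_intros h refl | simp)+
  then show ?thesis by (simp add: cG_def algebra_simps)
qed

lemma G1_eq_K1:
  assumes green: "green_function a1 b1 c1 a2 b2 c2 a3 b3 c3 G G1 G2"
    and t: "t \<in> {0..1}" and s: "s \<in> {0..1}" and ts: "t \<noteq> s"
  shows "G1 t s = K1 G t s"
proof -
  have d1: "((\<lambda>\<tau>. G \<tau> s) has_real_derivative G1 t s) (at t within {0..1})"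
    using green t s by (simp add: green_function_def)
  have d2: "((\<lambda>\<tau>. Kf G \<tau> s) has_real_derivative K1 G t s) (at t within {0..1})"
    using Kf_deriv[OF ts] by (rule has_field_derivative_at_within)
  have d3: "((\<lambda>\<tau>. G \<tau> s) has_real_derivative K1 G t s) (at t within {0..1})"
    by (rule has_field_derivative_transform_within[OF d2, of 1]) (use t s G_eq_K[OF green _ s] in auto)
  show ?thesis using deriv_unique01[OF t d1 d3] .
qed

lemma G2_eq:
  assumes green: "green_function a1 b1 c1 a2 b2 c2 a3 b3 c3 G G1 G2"
    and t: "t \<in> {0..1}" and s: "s \<in> {0..1}" and ts: "t \<noteq> s"
  shows "G2 t s = (if s < t then 1 else 0) + cG G s"
proof -
  have d1: "((\<lambda>\<tau>. G1 \<tau> s) has_real_derivative G2 t s) (at t within {0..1})"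
    using green t s ts by (simp add: green_function_def)
  have d2: "((\<lambda>\<tau>. K1 G \<tau> s) has_real_derivative ((if s < t then 1 else 0) + cG G s)) (at t within {0..1})"
    using K1_deriv[OF ts] by (rule has_field_derivative_at_within)
  have d3: "((\<lambda>\<tau>. G1 \<tau> s) has_real_derivative ((if s < t then 1 else 0) + cG G s)) (at t within {0..1})"
  proof (rule has_field_derivative_transform_within[OF d2, of "\<bar>t - s\<bar>"])
    fix x assume x: "x \<in> {0..1}" "dist x t < \<bar>t - s\<bar>"
    then have "x \<noteq> s" by (auto simp: dist_real_def)
    then show "K1 G x s = G1 x s" using G1_eq_K1[OF green x(1) s] by simp
  qed (use t ts in auto)
  show ?thesis using deriv_unique01[OF t d1 d3] .
qed

definition hat :: "nat \<Rightarrow> nat \<Rightarrow> real \<Rightarrow> real" where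
  "hat n j t = max 0 (1 - \<bar>real n * t - real j\<bar>)"

definition PL :: "nat \<Rightarrow> (nat \<Rightarrow> real) \<Rightarrow> real \<Rightarrow> real" where
  "PL n v t = (\<Sum>j\<le>n. v j * hat n j t)"

lemma hat_nonneg: "0 \<le> hat n j t" by (simp add: hat_def)

lemma hat_cont[continuous_intros]: "continuous_on S (hat n j)"
  unfolding hat_def by (intro continuous_intros)

lemma PL_cont[continuous_intros]: "continuous_on S (PL n v)"
  unfolding PL_def by (intro continuous_intros)

lemma hat_sum_aux: "0 \<le> x \<Longrightarrow> x \<le> real n \<Longrightarrow> (\<Sum>j\<le>n. max 0 (1 - \<bar>x - real j\<bar>)) = 1"
proof (induction n arbitrary: x)
  case 0 then show ?case by simp
next
  case (Suc n)
  have split: "(\<Sum>j\<le>Suc n. max 0 (1 - \<bar>x - real j\<bar>)) = max 0 (1 - \<bar>x\<bar>) + (\<Sum>j\<le>n. max 0 (1 - \<bar>(x - 1) - real j\<bar>))"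
    by (subst sum.atMost_Suc_shift) (simp add: algebra_simps)
  show ?case
  proof (cases "x \<ge> 1")
    case True
    have "(\<Sum>j\<le>n. max 0 (1 - \<bar>(x - 1) - real j\<bar>)) = 1"
      using Suc.prems True by (intro Suc.IH) auto
    then show ?thesis using split True by simp
  next
    case False
    have "(\<Sum>j\<le>n. max 0 (1 - \<bar>(x - 1) - real j\<bar>)) = (\<Sum>j\<le>n. if j = 0 then x else 0)"
    proof (rule sum.cong)
      fix j assume "j \<in> {..n}"
      show "max 0 (1 - \<bar>(x - 1) - real j\<bar>) = (if j = 0 then x else 0)"
        using False Suc.prems by (cases "j = 0") auto
    qed simp
    also have "\<dots> = x" by (simp add: sum.delta)
    finally show ?thesis using split False Suc.prems by simp
  qed
qed

lemma hat_sum: "t \<in> {0..1} \<Longrightarrow> (\<Sum>j\<le>n. hat n j t) = 1"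
  unfolding hat_def by (rule hat_sum_aux) (auto simp: mult_left_le)

lemma hat_supp:
  assumes "hat n j t \<noteq> 0" "n > 0"
  shows "\<bar>t - real j / real n\<bar> < 1 / real n"
proof -
  have "\<bar>real n * t - real j\<bar> < 1" using assms(1) by (auto simp: hat_def)
  moreover have "real n * t - real j = real n * (t - real j / real n)" using assms(2) by (simp add: field_simps)
  ultimately have "real n * \<bar>t - real j / real n\<bar> < 1" by (simp add: abs_mult)
  then show ?thesis using assms(2) by (simp add: field_simps)
qed

lemma PL_bound:
  assumes "\<And>j. j \<le> n \<Longrightarrow> \<bar>v j\<bar> \<le> M" "t \<in> {0..1}"
  shows "\<bar>PL n v t\<bar> \<le> M"
proof -
  have "\<bar>PL n v t\<bar> \<le> (\<Sum>j\<le>n. \<bar>v j * hat n j t\<bar>)" unfolding PL_def by (rule sum_abs)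
  also have "\<dots> \<le> (\<Sum>j\<le>n. M * hat n j t)"
    by (intro sum_mono) (use assms(1) in \<open>auto simp: abs_mult hat_nonneg intro!: mult_right_mono\<close>)
  also have "\<dots> = M" using hat_sum[OF assms(2)] by (simp flip: sum_distrib_left)
  finally show ?thesis .
qed

lemma PL_approx:
  assumes v: "\<And>j. j \<le> n \<Longrightarrow> v j = \<psi> (real j / real n)" and n: "n > 0" and t: "t \<in> {0..1}"
    and close: "\<And>\<tau>. \<tau> \<in> {0..1} \<Longrightarrow> \<bar>\<tau> - t\<bar> < 1 / real n \<Longrightarrow> \<bar>\<psi> \<tau> - \<psi> t\<bar> \<le> \<epsilon>"
  shows "\<bar>PL n v t - \<psi> t\<bar> \<le> \<epsilon>"
proof -
  have "PL n v t - \<psi> t = (\<Sum>j\<le>n. (v j - \<psi> t) * hat n j t)"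
    using hat_sum[OF t, of n] by (simp add: PL_def sum_subtractf left_diff_distrib flip: sum_distrib_left)
  then have "\<bar>PL n v t - \<psi> t\<bar> \<le> (\<Sum>j\<le>n. \<bar>(v j - \<psi> t) * hat n j t\<bar>)" by (simp add: sum_abs)
  also have "\<dots> \<le> (\<Sum>j\<le>n. \<epsilon> * hat n j t)"
  proof (rule sum_mono)
    fix j assume j: "j \<in> {..n}"
    show "\<bar>(v j - \<psi> t) * hat n j t\<bar> \<le> \<epsilon> * hat n j t"
    proof (cases "hat n j t = 0")
      case True then show ?thesis by simp
    next
      case False
      have "\<bar>t - real j / real n\<bar> < 1 / real n" using hat_supp[OF False n] .
      moreover have "real j / real n \<in> {0..1}" using j n by (auto simp: field_simps)
      ultimately have "\<bar>\<psi> (real j / real n) - \<psi> t\<bar> \<le> \<epsilon>" using close[of "real j / real n"] by (simp add: abs_minus_commute)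
      then show ?thesis using v[of j] j by (auto simp: abs_mult hat_nonneg intro!: mult_right_mono)
    qed
  qed
  also have "\<dots> = \<epsilon>" using hat_sum[OF t] by (simp flip: sum_distrib_left)
  finally show ?thesis .
qed

lemma PL_fixed_exists:
  fixes Phi :: "(real \<Rightarrow> real) \<Rightarrow> real \<Rightarrow> real"
    and F :: "real \<Rightarrow> real \<Rightarrow> real \<Rightarrow> real \<Rightarrow> real"
    and ka kb kc :: "nat \<Rightarrow> real \<Rightarrow> real"
  assumes Mpos: "M > 0" and n: "n > 0"
    and Phi_form: "\<And>v t. (\<forall>j\<le>n. \<bar>v j\<bar> \<le> M) \<Longrightarrow> t \<in> {0..1} \<Longrightarrow>
        Phi (PL n v) t = F t (\<Sum>j\<le>n. v j * ka j t) (\<Sum>j\<le>n. v j * kb j t) (\<Sum>j\<le>n. v j * kc j t)"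
    and Fcont: "continuous_on D (\<lambda>(t,x,y,z). F t x y z)"
    and inD: "\<And>v t. (\<forall>j\<le>n. \<bar>v j\<bar> \<le> M) \<Longrightarrow> t \<in> {0..1} \<Longrightarrow>
        (t, (\<Sum>j\<le>n. v j * ka j t), (\<Sum>j\<le>n. v j * kb j t), (\<Sum>j\<le>n. v j * kc j t)) \<in> D"
    and Pb: "\<And>v t. (\<forall>j\<le>n. \<bar>v j\<bar> \<le> M) \<Longrightarrow> t \<in> {0..1} \<Longrightarrow> \<bar>Phi (PL n v) t\<bar> \<le> M"
  shows "\<exists>v. (\<forall>j\<le>n. \<bar>v j\<bar> \<le> M) \<and> (\<forall>j\<le>n. v j = Phi (PL n v) (real j / real n))"
proof -
  define c where "c = M * real (Suc n)"
  have c0: "c > 0" using Mpos by (simp add: c_def)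
  define cl where "cl = (\<lambda>y::real. max (-M) (min M y))"
  define vv where "vv = (\<lambda>x::nat\<Rightarrow>real. (\<lambda>j. cl (c * x j)))"
  have vvb: "\<forall>j\<le>n. \<bar>vv x j\<bar> \<le> M" for x using Mpos by (auto simp: vv_def cl_def)
  define g where "g = (\<lambda>x. (\<lambda>i. if i \<le> n then Phi (PL n (vv x)) (real i / real n) / c else 0))"
  let ?P = "powertop_real UNIV"
  let ?X = "subtopology ?P (ballN n)"
  have tau: "real i / real n \<in> {0..1}" if "i \<le> n" for i using that n by (auto simp: field_simps)
  have maps: "g x \<in> ballN n" if "x \<in> ballN n" for x
  proof -
    have gi: "\<bar>g x i\<bar> \<le> M / c" if i: "i \<le> n" for i
    proof -
      have P: "\<bar>Phi (PL n (vv x)) (real i / real n)\<bar> \<le> M" by (rule Pb[OF vvb tau[OF i]])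
      have "g x i = Phi (PL n (vv x)) (real i / real n) / c" using i by (simp add: g_def)
      also have "\<bar>\<dots>\<bar> \<le> M / c" using P c0 by (simp add: abs_divide divide_right_mono)
      finally show ?thesis .
    qed
    have "(\<Sum>i\<le>n. (g x i)^2) \<le> (\<Sum>i\<le>n. (M / c)^2)"
    proof (rule sum_mono)
      fix i assume "i \<in> {..n}"
      then have "\<bar>g x i\<bar> \<le> M / c" using gi by auto
      then have "\<bar>g x i\<bar>^2 \<le> (M / c)^2" by (rule power_mono) simp
      then show "(g x i)^2 \<le> (M / c)^2" by simp
    qed
    also have "\<dots> = real (Suc n) * (M / c)^2" by simp
    also have "\<dots> = 1 / real (Suc n)"
    proof -
      have "M / c = 1 / real (Suc n)" using Mpos by (simp add: c_def)
      then show ?thesis by (simp add: power2_eq_square)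
    qed
    also have "\<dots> \<le> 1" by simp
    finally show ?thesis by (simp add: ballN_def g_def)
  qed
  have cont: "continuous_map ?X euclideanreal (\<lambda>x. g x i)" for i
  proof (cases "i \<le> n")
    case False then show ?thesis by (simp add: g_def)
  next
    case True
    define \<tau> where "\<tau> = real i / real n"
    have \<tau>: "\<tau> \<in> {0..1}" using tau[OF True] by (simp add: \<tau>_def)
    have cproj: "continuous_map ?X euclideanreal (\<lambda>x. x j)" for j
      by (rule continuous_map_from_subtopology, rule continuous_map_product_projection) simp
    have cvv: "continuous_map ?X euclideanreal (\<lambda>x. vv x j)" for j
      unfolding vv_def cl_def
      by (intro continuous_map_real_max continuous_map_real_min continuous_map_real_mult_left cproj continuous_map_canonical_const)
    have cS: "continuous_map ?X euclideanreal (\<lambda>x. \<Sum>j\<le>n. vv x j * a j \<tau>)" for a :: "nat \<Rightarrow> real \<Rightarrow> real"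
      by (intro continuous_map_sum continuous_map_real_mult_right cvv) auto
    define h where "h = (\<lambda>x. (\<tau>, (\<Sum>j\<le>n. vv x j * ka j \<tau>), (\<Sum>j\<le>n. vv x j * kb j \<tau>), (\<Sum>j\<le>n. vv x j * kc j \<tau>)))"
    have ch: "continuous_map ?X (top_of_set D) h"
    proof (subst continuous_map_in_subtopology, intro conjI)
      have "continuous_map ?X (prod_topology euclidean (prod_topology euclidean (prod_topology euclidean euclidean))) h"
        unfolding h_def by (intro continuous_map_pairedI cS continuous_map_canonical_const)
      then show "continuous_map ?X euclidean h" by simp
      show "h \<in> topspace ?X \<rightarrow> D" using inD[OF vvb \<tau>] by (auto simp: h_def)
    qed
    have cF: "continuous_map (top_of_set D) euclideanreal (\<lambda>(t,x,y,z). F t x y z)"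
      using Fcont by simp
    have "continuous_map ?X euclideanreal ((\<lambda>(t,x,y,z). F t x y z) \<circ> h)"
      by (rule continuous_map_compose[OF ch cF])
    then have "continuous_map ?X euclideanreal (\<lambda>x. F \<tau> (\<Sum>j\<le>n. vv x j * ka j \<tau>) (\<Sum>j\<le>n. vv x j * kb j \<tau>) (\<Sum>j\<le>n. vv x j * kc j \<tau>) / c)"
      by (intro continuous_map_real_divide continuous_map_canonical_const) (use c0 in \<open>auto simp: h_def o_def\<close>)
    then show ?thesis
    proof (rule continuous_map_eq)
      fix x assume "x \<in> topspace ?X"
      have "g x i = Phi (PL n (vv x)) \<tau> / c" using True by (simp add: g_def \<tau>_def)
      also have "\<dots> = F \<tau> (\<Sum>j\<le>n. vv x j * ka j \<tau>) (\<Sum>j\<le>n. vv x j * kb j \<tau>) (\<Sum>j\<le>n. vv x j * kc j \<tau>) / c"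
        by (simp only: Phi_form[OF vvb \<tau>])
      finally show "F \<tau> (\<Sum>j\<le>n. vv x j * ka j \<tau>) (\<Sum>j\<le>n. vv x j * kb j \<tau>) (\<Sum>j\<le>n. vv x j * kc j \<tau>) / c = g x i" by simp
    qed
  qed
  obtain x where x: "x \<in> ballN n" "g x = x" using brouwer_nat[OF cont maps] by blast
  define v where "v = vv x"
  have "v j = Phi (PL n v) (real j / real n)" if j: "j \<le> n" for j
  proof -
    have xj: "x j = Phi (PL n v) (real j / real n) / c"
      using fun_cong[OF x(2), of j] j by (simp add: g_def v_def)
    then have cx: "c * x j = Phi (PL n v) (real j / real n)" using c0 by simp
    have "\<bar>c * x j\<bar> \<le> M" using cx Pb[OF vvb[of x] tau[OF j]] by (simp add: v_def)
    then have "cl (c * x j) = c * x j" by (auto simp: cl_def)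
    then show ?thesis using cx by (simp add: v_def vv_def)
  qed
  moreover have "\<forall>j\<le>n. \<bar>v j\<bar> \<le> M" using vvb by (simp add: v_def)
  ultimately show ?thesis by blast
qed

definition goodk :: "(real \<Rightarrow> real \<Rightarrow> real) \<Rightarrow> bool" where
  "goodk k \<longleftrightarrow> (\<forall>t\<in>{0..1}. (\<forall>p. continuous_on {0..1} p \<longrightarrow> (\<lambda>s. k t s * p s) integrable_on {0..1})
        \<and> (\<lambda>s. \<bar>k t s\<bar>) integrable_on {0..1})
     \<and> bdd_above ((\<lambda>t. integral {0..1} (\<lambda>s. \<bar>k t s\<bar>)) ` {0..1})"

lemma goodk_cont:
  assumes cont: "continuous_on ({0..1} \<times> {0..1}) (\<lambda>(t,s). k t s)"
  shows "goodk k"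
proof -
  have "compact ((\<lambda>(t,s). k t s) ` ({0..1::real} \<times> {0..1::real}))"
    by (intro compact_continuous_image cont compact_Times compact_Icc)
  then obtain B where B: "\<And>y. y \<in> (\<lambda>(t,s). k t s) ` ({0..1} \<times> {0..1}) \<Longrightarrow> norm y \<le> B"
    using compact_imp_bounded bounded_iff by metis
  have Bk: "\<bar>k t s\<bar> \<le> B" if "t \<in> {0..1}" "s \<in> {0..1}" for t s
    using B[of "k t s"] that by force
  show ?thesis unfolding goodk_def
  proof (intro conjI ballI allI impI)
    fix t :: real and p :: "real \<Rightarrow> real" assume t: "t \<in> {0..1}" and p: "continuous_on {0..1} p"
    show "(\<lambda>s. k t s * p s) integrable_on {0..1}"
      by (intro integrable_continuous_interval continuous_intros p slice_cont[OF cont t])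
  next
    fix t :: real assume t: "t \<in> {0..1}"
    show "(\<lambda>s. \<bar>k t s\<bar>) integrable_on {0..1}"
      by (intro integrable_continuous_interval continuous_intros slice_cont[OF cont t])
  next
    show "bdd_above ((\<lambda>t. integral {0..1} (\<lambda>s. \<bar>k t s\<bar>)) ` {0..1})"
    proof (rule bdd_aboveI2)
      fix t :: real assume t: "t \<in> {0..1}"
      have "integral {0..1} (\<lambda>s. \<bar>k t s\<bar>) \<le> integral {0..1} (\<lambda>s::real. B)"
        by (intro Henstock_Kurzweil_Integration.integral_le integrable_continuous_interval continuous_intros slice_cont[OF cont t] Bk t) auto
      then show "integral {0..1} (\<lambda>s. \<bar>k t s\<bar>) \<le> B" by simp
    qed
  qed
qed

lemma pw_integrable:
  fixes p q :: "real \<Rightarrow> real"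
  assumes p: "continuous_on {0..1} p" and q: "continuous_on {0..1} q" and t: "t \<in> {0..1}"
  shows "(\<lambda>s. if s \<le> t then p s else q s) integrable_on {0..1}"
proof (rule Henstock_Kurzweil_Integration.integrable_combine[of 0 t 1])
  have "p integrable_on {0..t}"
    by (intro integrable_continuous_interval continuous_on_subset[OF p]) (use t in auto)
  then show "(\<lambda>s. if s \<le> t then p s else q s) integrable_on {0..t}"
    by (rule integrable_spike[of _ _ "{}"]) auto
  have "q integrable_on {t..1}"
    by (intro integrable_continuous_interval continuous_on_subset[OF q]) (use t in auto)
  then show "(\<lambda>s. if s \<le> t then p s else q s) integrable_on {t..1}"
    by (rule integrable_spike[of _ _ "{t}"]) auto
qed (use t in auto)

lemma G2_spike:
  assumes green: "green_function a1 b1 c1 a2 b2 c2 a3 b3 c3 G G1 G2"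
    and t: "t \<in> {0..1}" and s: "s \<in> {0..1} - {t}"
  shows "G2 t s = (if s \<le> t then 1 + cG G s else cG G s)"
  using G2_eq[OF green t, of s] s by auto

lemma goodk_G2:
  assumes green: "green_function a1 b1 c1 a2 b2 c2 a3 b3 c3 G G1 G2"
  shows "goodk G2"
proof -
  have cont: "continuous_on ({0..1} \<times> {0..1}) (\<lambda>(t,s). G t s)"
    using green by (simp add: green_function_def)
  have cc: "continuous_on {0..1} (cG G)" by (rule cG_cont[OF cont])
  have "compact (cG G ` {0..1})" by (intro compact_continuous_image cc compact_Icc)
  then obtain B where B: "\<And>y. y \<in> cG G ` {0..1} \<Longrightarrow> norm y \<le> B"
    using compact_imp_bounded bounded_iff by metis
  have Bc: "\<bar>cG G s\<bar> \<le> B" if "s \<in> {0..1}" for s using B[of "cG G s"] that by force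
  show ?thesis unfolding goodk_def
  proof (intro conjI ballI allI impI)
    fix t :: real and p :: "real \<Rightarrow> real" assume t: "t \<in> {0..1}" and p: "continuous_on {0..1} p"
    have "(\<lambda>s. if s \<le> t then (1 + cG G s) * p s else cG G s * p s) integrable_on {0..1}"
      by (intro pw_integrable continuous_intros cc p t)
    then show "(\<lambda>s. G2 t s * p s) integrable_on {0..1}"
      by (rule integrable_spike[of _ _ "{t}"]) (auto simp: G2_spike[OF green t])
  next
    fix t :: real assume t: "t \<in> {0..1}"
    have "(\<lambda>s. if s \<le> t then \<bar>1 + cG G s\<bar> else \<bar>cG G s\<bar>) integrable_on {0..1}"
      by (intro pw_integrable continuous_intros cc t)
    then show "(\<lambda>s. \<bar>G2 t s\<bar>) integrable_on {0..1}"
      by (rule integrable_spike[of _ _ "{t}"]) (auto simp: G2_spike[OF green t])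
  next
    show "bdd_above ((\<lambda>t. integral {0..1} (\<lambda>s. \<bar>G2 t s\<bar>)) ` {0..1})"
    proof (rule bdd_aboveI2)
      fix t :: real assume t: "t \<in> {0..1}"
      have i: "(\<lambda>s. if s \<le> t then \<bar>1 + cG G s\<bar> else \<bar>cG G s\<bar>) integrable_on {0..1}"
        by (intro pw_integrable continuous_intros cc t)
      have "integral {0..1} (\<lambda>s. \<bar>G2 t s\<bar>) = integral {0..1} (\<lambda>s. if s \<le> t then \<bar>1 + cG G s\<bar> else \<bar>cG G s\<bar>)"
        by (rule integral_spike[of "{t}"]) (auto simp: G2_spike[OF green t])
      also have "\<dots> \<le> integral {0..1} (\<lambda>s::real. 1 + B)"
      proof (rule Henstock_Kurzweil_Integration.integral_le[OF i])
        fix s :: real assume s: "s \<in> {0..1}"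
        show "(if s \<le> t then \<bar>1 + cG G s\<bar> else \<bar>cG G s\<bar>) \<le> 1 + B"
          using Bc[OF s] by auto
      qed auto
      finally show "integral {0..1} (\<lambda>s. \<bar>G2 t s\<bar>) \<le> 1 + B" by simp
    qed
  qed
qed

lemma goodk_bound:
  assumes gk: "goodk k" and t: "t \<in> {0..1}" and p: "continuous_on {0..1} p"
    and pB: "\<And>s. s \<in> {0..1} \<Longrightarrow> \<bar>p s\<bar> \<le> B"
  shows "\<bar>integral {0..1} (\<lambda>s. k t s * p s)\<bar> \<le> (SUP t\<in>{0..1}. integral {0..1} (\<lambda>s. \<bar>k t s\<bar>)) * B"
proof -
  have i1: "(\<lambda>s. k t s * p s) integrable_on {0..1}" and i2: "(\<lambda>s. \<bar>k t s\<bar>) integrable_on {0..1}"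
    and bdd: "bdd_above ((\<lambda>t. integral {0..1} (\<lambda>s. \<bar>k t s\<bar>)) ` {0..1})"
    using gk t p unfolding goodk_def by auto
  have B0: "0 \<le> B" using pB[of 0] by auto
  have "norm (integral {0..1} (\<lambda>s. k t s * p s)) \<le> integral {0..1} (\<lambda>s. \<bar>k t s\<bar> * B)"
  proof (rule Henstock_Kurzweil_Integration.integral_norm_bound_integral[OF i1 integrable_on_mult_left[OF i2]])
    fix s :: real assume s: "s \<in> {0..1}"
    show "norm (k t s * p s) \<le> \<bar>k t s\<bar> * B"
      using pB[OF s] by (simp add: abs_mult mult_left_mono)
  qed
  then have "\<bar>integral {0..1} (\<lambda>s. k t s * p s)\<bar> \<le> integral {0..1} (\<lambda>s. \<bar>k t s\<bar> * B)" by simp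
  also have "\<dots> = integral {0..1} (\<lambda>s. \<bar>k t s\<bar>) * B"
    by simp
  also have "\<dots> \<le> (SUP t\<in>{0..1}. integral {0..1} (\<lambda>s. \<bar>k t s\<bar>)) * B"
    by (intro mult_right_mono cSUP_upper t bdd B0)
  finally show ?thesis .
qed

lemma goodk_diff:
  assumes gk: "goodk k" and t: "t \<in> {0..1}" and p: "continuous_on {0..1} p" and q: "continuous_on {0..1} q"
  shows "integral {0..1} (\<lambda>s. k t s * p s) - integral {0..1} (\<lambda>s. k t s * q s) = integral {0..1} (\<lambda>s. k t s * (p s - q s))"
proof -
  have i1: "(\<lambda>s. k t s * p s) integrable_on {0..1}" and i2: "(\<lambda>s. k t s * q s) integrable_on {0..1}"
    using gk t p q unfolding goodk_def by auto
  show ?thesis using integral_diff[OF i1 i2] by (simp add: algebra_simps)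
qed

lemma goodk_sum:
  assumes gk: "goodk k" and t: "t \<in> {0..1}" and fin: "finite J"
    and h: "\<And>j. j \<in> J \<Longrightarrow> continuous_on {0..1} (h j)"
  shows "integral {0..1} (\<lambda>s. k t s * (\<Sum>j\<in>J. v j * h j s)) = (\<Sum>j\<in>J. v j * integral {0..1} (\<lambda>s. k t s * h j s))"
proof -
  have "integral {0..1} (\<lambda>s. k t s * (\<Sum>j\<in>J. v j * h j s)) = integral {0..1} (\<lambda>s. \<Sum>j\<in>J. v j * (k t s * h j s))"
    by (simp add: sum_distrib_left algebra_simps)
  also have "\<dots> = (\<Sum>j\<in>J. integral {0..1} (\<lambda>s. v j * (k t s * h j s)))"
  proof (rule integral_sum[OF fin])
    fix j assume j: "j \<in> J"
    have "(\<lambda>s. k t s * h j s) integrable_on {0..1}" using gk t h[OF j] unfolding goodk_def by auto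
    then show "(\<lambda>s. v j * (k t s * h j s)) integrable_on {0..1}" by (rule integrable_on_mult_right)
  qed
  also have "\<dots> = (\<Sum>j\<in>J. v j * integral {0..1} (\<lambda>s. k t s * h j s))"
    by simp
  finally show ?thesis .
qed

lemma lipschitz01:
  fixes w w' :: "real \<Rightarrow> real"
  assumes cw: "continuous_on {0..1} w"
    and dw: "\<And>x. x \<in> {0<..<1} \<Longrightarrow> (w has_real_derivative w' x) (at x)"
    and bw: "\<And>x. x \<in> {0<..<1} \<Longrightarrow> \<bar>w' x\<bar> \<le> L"
    and t: "t \<in> {0..1}" and t': "t' \<in> {0..1}"
  shows "\<bar>w t - w t'\<bar> \<le> L * \<bar>t - t'\<bar>"
proof -
  have main: "\<bar>w b - w a\<bar> \<le> L * (b - a)" if ab: "a < b" "a \<in> {0..1}" "b \<in> {0..1}" for a b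
  proof -
    have "continuous_on {a..b} w" using cw by (rule continuous_on_subset) (use ab in auto)
    moreover have "w differentiable (at x)" if "a < x" "x < b" for x
      using dw[of x] that ab by (auto simp: real_differentiable_def)
    ultimately obtain l z where z: "a < z" "z < b" "DERIV w z :> l" "w b - w a = (b - a) * l"
      using MVT[OF ab(1)] by blast
    have zin: "z \<in> {0<..<1}" using z ab by auto
    have "l = w' z" using DERIV_unique[OF z(3) dw[OF zin]] .
    then have "\<bar>w b - w a\<bar> = (b - a) * \<bar>w' z\<bar>" using z ab by (simp add: abs_mult)
    also have "\<dots> \<le> (b - a) * L" using bw[OF zin] ab by (intro mult_left_mono) auto
    finally show ?thesis by (simp add: mult.commute)
  qed
  show ?thesis
  proof (cases t t' rule: linorder_cases)
    case less then show ?thesis using main[OF less t t'] by (simp add: abs_minus_commute)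
  next
    case equal then show ?thesis by simp
  next
    case greater then show ?thesis using main[OF greater t' t] by simp
  qed
qed

lemma dist_Pair_le: "dist (x, y) (x', y') \<le> dist x x' + dist y y'"
  using dist_Pair_Pair[of x y x' y'] sqrt_sum_squares_le_sum_abs[of "dist x x'" "dist y y'"] by simp

lemma dist4_le:
  fixes a b c d a' b' c' d' :: real
  shows "dist (a, b, c, d) (a', b', c', d') \<le> \<bar>a - a'\<bar> + \<bar>b - b'\<bar> + \<bar>c - c'\<bar> + \<bar>d - d'\<bar>"
proof -
  have "dist (a, b, c, d) (a', b', c', d') \<le> dist a a' + dist (b, c, d) (b', c', d')" by (rule dist_Pair_le)
  also have "dist (b, c, d) (b', c', d') \<le> dist b b' + dist (c, d) (c', d')" by (rule dist_Pair_le)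
  also have "dist (c, d) (c', d') \<le> dist c c' + dist d d'" by (rule dist_Pair_le)
  finally show ?thesis by (simp add: dist_real_def add.assoc)
qed

lemma goodk_tendsto:
  assumes gk: "goodk k" and t: "t \<in> {0..1}"
    and p: "\<And>m. continuous_on {0..1} (p m)" and q: "continuous_on {0..1} q"
    and conv: "\<And>e. e > 0 \<Longrightarrow> \<exists>N. \<forall>m\<ge>N. \<forall>s\<in>{0..1}. \<bar>p m s - q s\<bar> < e"
  shows "(\<lambda>m. integral {0..1} (\<lambda>s. k t s * p m s)) \<longlonglongrightarrow> integral {0..1} (\<lambda>s. k t s * q s)"
proof (rule LIMSEQ_I)
  fix e :: real assume e: "e > 0"
  define S where "S = (SUP t\<in>{0..1}. integral {0..1} (\<lambda>s. \<bar>k t s\<bar>))"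
  have i: "(\<lambda>s. \<bar>k t s\<bar>) integrable_on {0..1}" and bdd: "bdd_above ((\<lambda>t. integral {0..1} (\<lambda>s. \<bar>k t s\<bar>)) ` {0..1})"
    using gk t unfolding goodk_def by auto
  have "0 \<le> integral {0..1} (\<lambda>s. \<bar>k t s\<bar>)" by (rule Henstock_Kurzweil_Integration.integral_nonneg[OF i]) auto
  also have "\<dots> \<le> S" unfolding S_def by (rule cSUP_upper[OF t bdd])
  finally have S0: "0 \<le> S" .
  define e' where "e' = e / (S + 1)"
  have e': "e' > 0" using e S0 by (simp add: e'_def)
  obtain N where N: "\<And>m s. m \<ge> N \<Longrightarrow> s \<in> {0..1} \<Longrightarrow> \<bar>p m s - q s\<bar> < e'" using conv[OF e'] by blast
  show "\<exists>N. \<forall>m\<ge>N. norm (integral {0..1} (\<lambda>s. k t s * p m s) - integral {0..1} (\<lambda>s. k t s * q s)) < e"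
  proof (intro exI allI impI)
    fix m assume m: "m \<ge> N"
    have "\<bar>integral {0..1} (\<lambda>s. k t s * p m s) - integral {0..1} (\<lambda>s. k t s * q s)\<bar>
        = \<bar>integral {0..1} (\<lambda>s. k t s * (p m s - q s))\<bar>"
      by (simp add: goodk_diff[OF gk t p q])
    also have "\<dots> \<le> S * e'"
      unfolding S_def
      by (rule goodk_bound[OF gk t]) (use N[OF m] in \<open>auto intro!: continuous_intros p q less_imp_le\<close>)
    also have "\<dots> < e"
      using e S0 by (simp add: e'_def field_simps)
    finally show "norm (integral {0..1} (\<lambda>s. k t s * p m s) - integral {0..1} (\<lambda>s. k t s * q s)) < e"
      by simp
  qed
qed

theorem theorem1:
  fixes a1 b1 c1 a2 b2 c2 a3 b3 c3 :: real
    and G G1 G2 :: "real \<Rightarrow> real \<Rightarrow> real"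
    and f :: "real \<Rightarrow> real \<Rightarrow> real \<Rightarrow> real \<Rightarrow> real"
    and M0 M1 M2 M :: real
  assumes rank: "rank (bc_matrix a1 b1 c1 a2 b2 c2 a3 b3 c3) = 3"
    and green: "green_function a1 b1 c1 a2 b2 c2 a3 b3 c3 G G1 G2"
    and M0_def: "M0 = (SUP t\<in>{0..1}. integral {0..1} (\<lambda>s. \<bar>G t s\<bar>))"
    and M1_def: "M1 = (SUP t\<in>{0..1}. integral {0..1} (\<lambda>s. \<bar>G1 t s\<bar>))"
    and M2_def: "M2 = (SUP t\<in>{0..1}. integral {0..1} (\<lambda>s. \<bar>G2 t s\<bar>))"
    and Mpos: "M > 0"
    and fcont: "continuous_on {(t,x,y,z). 0 \<le> t \<and> t \<le> 1 \<and> \<bar>x\<bar> \<le> M0 * M \<and> \<bar>y\<bar> \<le> M1 * M \<and> \<bar>z\<bar> \<le> M2 * M}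
                  (\<lambda>(t,x,y,z). f t x y z)"
    and fbound: "\<And>t x y z. 0 \<le> t \<Longrightarrow> t \<le> 1 \<Longrightarrow> \<bar>x\<bar> \<le> M0 * M \<Longrightarrow> \<bar>y\<bar> \<le> M1 * M \<Longrightarrow>
                   \<bar>z\<bar> \<le> M2 * M \<Longrightarrow> \<bar>f t x y z\<bar> \<le> M"
  shows "\<exists>u u1 u2.
           bvp_sol a1 b1 c1 a2 b2 c2 a3 b3 c3 (\<lambda>t. f t (u t) (u1 t) (u2 t)) u u1 u2 \<and>
           (\<forall>t\<in>{0..1}. \<bar>u t\<bar> \<le> M0 * M \<and> \<bar>u1 t\<bar> \<le> M1 * M \<and> \<bar>u2 t\<bar> \<le> M2 * M)"
proof -
  have cont0: "continuous_on ({0..1} \<times> {0..1}) (\<lambda>(t,s). G t s)"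
    and cont1: "continuous_on ({0..1} \<times> {0..1}) (\<lambda>(t,s). G1 t s)"
    using green by (simp_all add: green_function_def)
  have gk0: "goodk G" by (rule goodk_cont[OF cont0])
  have gk1: "goodk G1" by (rule goodk_cont[OF cont1])
  have gk2: "goodk G2" by (rule goodk_G2[OF green])
  define T :: "(real \<Rightarrow> real \<Rightarrow> real) \<Rightarrow> (real \<Rightarrow> real) \<Rightarrow> real \<Rightarrow> real"
    where "T = (\<lambda>k \<phi> t. integral {0..1} (\<lambda>s. k t s * \<phi> s))"
  define Phi where "Phi = (\<lambda>\<phi> t. f t (T G \<phi> t) (T G1 \<phi> t) (T G2 \<phi> t))"
  define D where "D = {(t::real,x::real,y::real,z::real). 0 \<le> t \<and> t \<le> 1 \<and> \<bar>x\<bar> \<le> M0 * M \<and> \<bar>y\<bar> \<le> M1 * M \<and> \<bar>z\<bar> \<le> M2 * M}"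
  define adm :: "(real \<Rightarrow> real) \<Rightarrow> bool" where "adm = (\<lambda>\<phi>. continuous_on {0..1} \<phi> \<and> (\<forall>s\<in>{0..1}. \<bar>\<phi> s\<bar> \<le> M))"
  have fc: "continuous_on D (\<lambda>(t,x,y,z). f t x y z)" using fcont by (simp add: D_def)
  have sol: "bvp_sol a1 b1 c1 a2 b2 c2 a3 b3 c3 \<phi> (T G \<phi>) (T G1 \<phi>) (T G2 \<phi>)"
    if "continuous_on {0..1} \<phi>" for \<phi> :: "real \<Rightarrow> real"
    using green that unfolding green_function_def T_def by blast
  have bnd: "\<bar>T G \<phi> t\<bar> \<le> M0 * M \<and> \<bar>T G1 \<phi> t\<bar> \<le> M1 * M \<and> \<bar>T G2 \<phi> t\<bar> \<le> M2 * M"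
    if "adm \<phi>" "t \<in> {0..1}" for \<phi> :: "real \<Rightarrow> real" and t :: real
    using goodk_bound[OF gk0 that(2), of \<phi> M] goodk_bound[OF gk1 that(2), of \<phi> M]
      goodk_bound[OF gk2 that(2), of \<phi> M] that(1)
    unfolding M0_def M1_def M2_def T_def adm_def by auto
  have inD: "(t, T G \<phi> t, T G1 \<phi> t, T G2 \<phi> t) \<in> D" if "adm \<phi>" "t \<in> {0..1}" for \<phi> :: "real \<Rightarrow> real" and t :: real
    using bnd[OF that] that(2) by (simp add: D_def)
  have Pb: "\<bar>Phi \<phi> t\<bar> \<le> M" if "adm \<phi>" "t \<in> {0..1}" for \<phi> :: "real \<Rightarrow> real" and t :: real
    using bnd[OF that] that(2) unfolding Phi_def by (intro fbound) auto
  have Tprops: "continuous_on {0..1} (T G \<phi>) \<and> continuous_on {0..1} (T G1 \<phi>) \<and> continuous_on {0..1} (T G2 \<phi>)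
      \<and> (\<forall>x\<in>{0<..<1}. (T G \<phi> has_real_derivative T G1 \<phi> x) (at x))
      \<and> (\<forall>x\<in>{0<..<1}. (T G1 \<phi> has_real_derivative T G2 \<phi> x) (at x))
      \<and> (\<forall>x\<in>{0<..<1}. (T G2 \<phi> has_real_derivative \<phi> x) (at x))"
    if "continuous_on {0..1} \<phi>" for \<phi> :: "real \<Rightarrow> real"
  proof -
    have s: "bvp_sol a1 b1 c1 a2 b2 c2 a3 b3 c3 \<phi> (T G \<phi>) (T G1 \<phi>) (T G2 \<phi>)" by (rule sol[OF that])
    then have d0: "\<And>t. t \<in> {0..1} \<Longrightarrow> (T G \<phi> has_real_derivative T G1 \<phi> t) (at t within {0..1})"
      and d1: "\<And>t. t \<in> {0..1} \<Longrightarrow> (T G1 \<phi> has_real_derivative T G2 \<phi> t) (at t within {0..1})"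
      and c2: "continuous_on {0..1} (T G2 \<phi>)"
      and d2: "\<And>t. t \<in> {0<..<1} \<Longrightarrow> (T G2 \<phi> has_real_derivative \<phi> t) (at t)"
      unfolding bvp_sol_def by auto
    have e0: "(T G \<phi> has_real_derivative T G1 \<phi> x) (at x)" if "x \<in> {0<..<1}" for x
      using d0[of x] that by (simp add: at_within_Icc_at)
    have e1: "(T G1 \<phi> has_real_derivative T G2 \<phi> x) (at x)" if "x \<in> {0<..<1}" for x
      using d1[of x] that by (simp add: at_within_Icc_at)
    show ?thesis
      using DERIV_continuous_on[OF d0] DERIV_continuous_on[OF d1] c2 d2 e0 e1
      by blast
  qed
  have lip: "\<bar>T G \<phi> t - T G \<phi> t'\<bar> \<le> \<bar>M1 * M\<bar> * \<bar>t - t'\<bar> \<and> \<bar>T G1 \<phi> t - T G1 \<phi> t'\<bar> \<le> \<bar>M2 * M\<bar> * \<bar>t - t'\<bar>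
        \<and> \<bar>T G2 \<phi> t - T G2 \<phi> t'\<bar> \<le> M * \<bar>t - t'\<bar>"
    if a: "adm \<phi>" and t: "t \<in> {0..1}" and t': "t' \<in> {0..1}" for \<phi> :: "real \<Rightarrow> real" and t t' :: real
  proof -
    have c: "continuous_on {0..1} \<phi>" using a by (simp add: adm_def)
    note P = Tprops[OF c]
    have b1: "\<bar>T G1 \<phi> x\<bar> \<le> \<bar>M1 * M\<bar>" if "x \<in> {0<..<1}" for x
      using bnd[OF a, of x] that by auto
    have b2: "\<bar>T G2 \<phi> x\<bar> \<le> \<bar>M2 * M\<bar>" if "x \<in> {0<..<1}" for x
      using bnd[OF a, of x] that by auto
    have "\<bar>T G \<phi> t - T G \<phi> t'\<bar> \<le> \<bar>M1 * M\<bar> * \<bar>t - t'\<bar>"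
      by (rule lipschitz01[OF _ _ b1 t t']) (use P in auto)
    moreover have "\<bar>T G1 \<phi> t - T G1 \<phi> t'\<bar> \<le> \<bar>M2 * M\<bar> * \<bar>t - t'\<bar>"
      by (rule lipschitz01[OF _ _ b2 t t']) (use P in auto)
    moreover have "\<bar>T G2 \<phi> t - T G2 \<phi> t'\<bar> \<le> M * \<bar>t - t'\<bar>"
      by (rule lipschitz01[OF _ _ _ t t', of _ "\<phi>"]) (use P a in \<open>auto simp: adm_def\<close>)
    ultimately show ?thesis by blast
  qed
  have Phi_cont: "continuous_on {0..1} (Phi \<phi>)" if a: "adm \<phi>" for \<phi> :: "real \<Rightarrow> real"
  proof -
    have c: "continuous_on {0..1} \<phi>" using a by (simp add: adm_def)
    note P = Tprops[OF c]
    have "continuous_on {0..1} (\<lambda>t. (\<lambda>(t,x,y,z). f t x y z) (t, T G \<phi> t, T G1 \<phi> t, T G2 \<phi> t))"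
      by (rule continuous_on_compose2[OF fc]) (use P inD[OF a] in \<open>auto intro!: continuous_intros\<close>)
    then show ?thesis by (simp add: Phi_def)
  qed
  have Phi_adm: "adm (Phi \<phi>)" if "adm \<phi>" for \<phi> :: "real \<Rightarrow> real"
    using Phi_cont[OF that] Pb[OF that] by (simp add: adm_def)
  have compD: "compact D"
  proof -
    have "D = {0..1} \<times> {-(M0*M)..M0*M} \<times> {-(M1*M)..M1*M} \<times> {-(M2*M)..M2*M}"
      by (auto simp: D_def abs_le_iff)
    then show ?thesis by (simp add: compact_Times)
  qed
  have uc: "uniformly_continuous_on D (\<lambda>(t,x,y,z). f t x y z)"
    by (rule compact_uniformly_continuous[OF fc compD])
  define L where "L = 1 + \<bar>M1 * M\<bar> + \<bar>M2 * M\<bar> + M"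
  have L0: "L > 0" using Mpos by (simp add: L_def add_pos_nonneg)
  have equi: "\<exists>\<delta>>0. \<forall>\<phi> t t'. adm \<phi> \<longrightarrow> t \<in> {0..1} \<longrightarrow> t' \<in> {0..1} \<longrightarrow> \<bar>t - t'\<bar> < \<delta> \<longrightarrow> \<bar>Phi \<phi> t - Phi \<phi> t'\<bar> < e"
    if e: "e > 0" for e
  proof -
    obtain d where d: "d > 0" and dd: "\<And>x x'. x \<in> D \<Longrightarrow> x' \<in> D \<Longrightarrow> dist x' x < d \<Longrightarrow>
        dist ((\<lambda>(t,x,y,z). f t x y z) x') ((\<lambda>(t,x,y,z). f t x y z) x) < e"
      using uc e unfolding uniformly_continuous_on_def by metis
    show ?thesis
    proof (intro exI conjI allI impI)
      show "d / L > 0" using d L0 by simp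
      fix \<phi> t t' assume a: "adm \<phi>" and t: "t \<in> {0..1}" and t': "t' \<in> {0..1}" and tt: "\<bar>t - t'\<bar> < d / L"
      note l = lip[OF a t t']
      have "dist (t, T G \<phi> t, T G1 \<phi> t, T G2 \<phi> t) (t', T G \<phi> t', T G1 \<phi> t', T G2 \<phi> t')
          \<le> \<bar>t - t'\<bar> + \<bar>T G \<phi> t - T G \<phi> t'\<bar> + \<bar>T G1 \<phi> t - T G1 \<phi> t'\<bar> + \<bar>T G2 \<phi> t - T G2 \<phi> t'\<bar>"
        by (rule dist4_le)
      also have "\<dots> \<le> \<bar>t - t'\<bar> + \<bar>M1 * M\<bar> * \<bar>t - t'\<bar> + \<bar>M2 * M\<bar> * \<bar>t - t'\<bar> + M * \<bar>t - t'\<bar>"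
        using l by linarith
      also have "\<dots> = L * \<bar>t - t'\<bar>" by (simp add: L_def algebra_simps)
      also have "\<dots> < d" using tt L0 by (simp add: field_simps)
      finally have "dist (t, T G \<phi> t, T G1 \<phi> t, T G2 \<phi> t) (t', T G \<phi> t', T G1 \<phi> t', T G2 \<phi> t') < d" .
      then have "dist (Phi \<phi> t) (Phi \<phi> t') < e"
        using dd[OF inD[OF a t'] inD[OF a t]] by (simp add: Phi_def)
      then show "\<bar>Phi \<phi> t - Phi \<phi> t'\<bar> < e" by (simp add: dist_real_def)
    qed
  qed
  have PLadm: "adm (PL n v)" if "\<forall>j\<le>n. \<bar>v j\<bar> \<le> M" for n v
    using PL_bound[of n v M] that by (auto simp: adm_def intro!: continuous_intros)
  have Tsum: "T k (PL n v) t = (\<Sum>j\<le>n. v j * T k (hat n j) t)" if "goodk k" "t \<in> {0..1}" for k n v t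
    unfolding T_def PL_def by (rule goodk_sum[OF that]) (auto intro: continuous_intros)
  have approx: "\<exists>v. (\<forall>j\<le>n. \<bar>v j\<bar> \<le> M) \<and> (\<forall>j\<le>n. v j = Phi (PL n v) (real j / real n))" if n: "n > 0" for n
  proof (rule PL_fixed_exists[OF Mpos n _ fc, where ka = "\<lambda>j t. T G (hat n j) t" and kb = "\<lambda>j t. T G1 (hat n j) t"
        and kc = "\<lambda>j t. T G2 (hat n j) t"])
    fix v :: "nat \<Rightarrow> real" and t :: real assume v: "\<forall>j\<le>n. \<bar>v j\<bar> \<le> M" and t: "t \<in> {0..1}"
    show "Phi (PL n v) t = f t (\<Sum>j\<le>n. v j * T G (hat n j) t) (\<Sum>j\<le>n. v j * T G1 (hat n j) t) (\<Sum>j\<le>n. v j * T G2 (hat n j) t)"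
      by (simp add: Phi_def Tsum[OF gk0 t] Tsum[OF gk1 t] Tsum[OF gk2 t])
    show "(t, \<Sum>j\<le>n. v j * T G (hat n j) t, \<Sum>j\<le>n. v j * T G1 (hat n j) t, \<Sum>j\<le>n. v j * T G2 (hat n j) t) \<in> D"
      using inD[OF PLadm[OF v] t] by (simp add: Tsum[OF gk0 t] Tsum[OF gk1 t] Tsum[OF gk2 t])
    show "\<bar>Phi (PL n v) t\<bar> \<le> M" by (rule Pb[OF PLadm[OF v] t])
  qed
  have "\<forall>m. \<exists>v. (\<forall>j\<le>Suc m. \<bar>v j\<bar> \<le> M) \<and> (\<forall>j\<le>Suc m. v j = Phi (PL (Suc m) v) (real j / real (Suc m)))"
  proof
    fix m show "\<exists>v. (\<forall>j\<le>Suc m. \<bar>v j\<bar> \<le> M) \<and> (\<forall>j\<le>Suc m. v j = Phi (PL (Suc m) v) (real j / real (Suc m)))"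
      by (rule approx) simp
  qed
  then obtain V where V: "\<And>m. (\<forall>j\<le>Suc m. \<bar>V m j\<bar> \<le> M) \<and> (\<forall>j\<le>Suc m. V m j = Phi (PL (Suc m) (V m)) (real j / real (Suc m)))"
    by metis
  define ph where "ph = (\<lambda>m. PL (Suc m) (V m))"
  define ps where "ps = (\<lambda>m. Phi (ph m))"
  have ph_adm: "adm (ph m)" for m unfolding ph_def using PLadm V by blast
  have ps_adm: "adm (ps m)" for m unfolding ps_def using Phi_adm[OF ph_adm] .
  have close: "\<exists>N. \<forall>m\<ge>N. \<forall>t\<in>{0..1}. \<bar>ph m t - ps m t\<bar> \<le> e" if e: "e > 0" for e
  proof -
    obtain \<delta> where \<delta>: "\<delta> > 0" and hd: "\<And>\<phi> t t'. adm \<phi> \<Longrightarrow> t \<in> {0..1} \<Longrightarrow> t' \<in> {0..1} \<Longrightarrow> \<bar>t - t'\<bar> < \<delta> \<Longrightarrow> \<bar>Phi \<phi> t - Phi \<phi> t'\<bar> < e"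
      using equi[OF e] by blast
    obtain N where N: "inverse (real (Suc N)) < \<delta>" using reals_Archimedean[OF \<delta>] by blast
    show ?thesis
    proof (intro exI allI impI ballI)
      fix m :: nat and t :: real assume m: "N \<le> m" and t: "t \<in> {0..1}"
      have mN: "1 / real (Suc m) < \<delta>"
      proof -
        have "1 / real (Suc m) \<le> inverse (real (Suc N))" using m by (simp add: inverse_eq_divide frac_le)
        then show ?thesis using N by simp
      qed
      show "\<bar>ph m t - ps m t\<bar> \<le> e" unfolding ph_def ps_def
      proof (rule PL_approx)
        show "\<And>j. j \<le> Suc m \<Longrightarrow> V m j = Phi (PL (Suc m) (V m)) (real j / real (Suc m))" using V by blast
        fix \<tau> :: real assume \<tau>: "\<tau> \<in> {0..1}" "\<bar>\<tau> - t\<bar> < 1 / real (Suc m)"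
        show "\<bar>Phi (PL (Suc m) (V m)) \<tau> - Phi (PL (Suc m) (V m)) t\<bar> \<le> e"
          using hd[OF ph_adm[of m, unfolded ph_def] \<tau>(1) t] \<tau>(2) mN by simp
      qed (use t in auto)
    qed
  qed
  obtain g r where gcont: "continuous_on {0..1} g" and r: "strict_mono (r :: nat \<Rightarrow> nat)"
    and unif: "\<And>e. 0 < e \<Longrightarrow> \<exists>N. \<forall>n x. n \<ge> N \<and> x \<in> {0..1} \<longrightarrow> norm (ps (r n) x - g x) < e"
  proof (rule Arzela_Ascoli[of "{0..1}" ps M])
    show "compact {0..1::real}" by simp
    show "\<And>n x. x \<in> {0..1} \<Longrightarrow> norm (ps n x) \<le> M" using ps_adm by (simp add: adm_def)
    fix x e assume x: "x \<in> {0..1::real}" and e: "0 < (e::real)"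
    obtain \<delta> where \<delta>: "\<delta> > 0" and hd: "\<And>\<phi> t t'. adm \<phi> \<Longrightarrow> t \<in> {0..1} \<Longrightarrow> t' \<in> {0..1} \<Longrightarrow> \<bar>t - t'\<bar> < \<delta> \<Longrightarrow> \<bar>Phi \<phi> t - Phi \<phi> t'\<bar> < e"
      using equi[OF e] by blast
    show "\<exists>d>0. \<forall>n y. y \<in> {0..1} \<and> norm (x - y) < d \<longrightarrow> norm (ps n x - ps n y) < e"
      using \<delta> hd[OF ph_adm x] by (auto simp: ps_def)
  qed blast
  have rge: "r m \<ge> m" for m using r by (rule seq_suble)
  have gb: "\<bar>g t\<bar> \<le> M" if t: "t \<in> {0..1}" for t
  proof (rule field_le_epsilon)
    fix e :: real assume e: "e > 0"
    obtain N where "\<forall>n x. n \<ge> N \<and> x \<in> {0..1} \<longrightarrow> norm (ps (r n) x - g x) < e" using unif[OF e] by blast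
    then have "\<bar>ps (r N) t - g t\<bar> < e" using t by auto
    moreover have "\<bar>ps (r N) t\<bar> \<le> M" using ps_adm t by (simp add: adm_def)
    ultimately show "\<bar>g t\<bar> \<le> M + e" by linarith
  qed
  have gadm: "adm g" using gcont gb by (simp add: adm_def)
  have phconv: "\<exists>N. \<forall>m\<ge>N. \<forall>s\<in>{0..1}. \<bar>ph (r m) s - g s\<bar> < e" if e: "e > 0" for e
  proof -
    obtain N1 where N1: "\<forall>m\<ge>N1. \<forall>t\<in>{0..1}. \<bar>ph m t - ps m t\<bar> \<le> e/2" using close[of "e/2"] e by auto
    obtain N2 where N2: "\<forall>n x. n \<ge> N2 \<and> x \<in> {0..1} \<longrightarrow> norm (ps (r n) x - g x) < e/2" using unif[of "e/2"] e by auto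
    show ?thesis
    proof (intro exI allI impI ballI)
      fix m :: nat and s :: real assume m: "max N1 N2 \<le> m" and s: "s \<in> {0..1}"
      have "\<bar>ph (r m) s - ps (r m) s\<bar> \<le> e/2" using N1 m s rge[of m] by auto
      moreover have "\<bar>ps (r m) s - g s\<bar> < e/2" using N2 m s by auto
      ultimately show "\<bar>ph (r m) s - g s\<bar> < e" by linarith
    qed
  qed
  have fixg: "g t = Phi g t" if t: "t \<in> {0..1}" for t
  proof -
    have cph: "\<And>m. continuous_on {0..1} (ph (r m))" using ph_adm by (simp add: adm_def)
    have l0: "(\<lambda>m. T G (ph (r m)) t) \<longlonglongrightarrow> T G g t"
      unfolding T_def by (rule goodk_tendsto[OF gk0 t cph gcont phconv])
    have l1: "(\<lambda>m. T G1 (ph (r m)) t) \<longlonglongrightarrow> T G1 g t"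
      unfolding T_def by (rule goodk_tendsto[OF gk1 t cph gcont phconv])
    have l2: "(\<lambda>m. T G2 (ph (r m)) t) \<longlonglongrightarrow> T G2 g t"
      unfolding T_def by (rule goodk_tendsto[OF gk2 t cph gcont phconv])
    have lt: "(\<lambda>m. (t, T G (ph (r m)) t, T G1 (ph (r m)) t, T G2 (ph (r m)) t)) \<longlonglongrightarrow> (t, T G g t, T G1 g t, T G2 g t)"
      by (intro tendsto_Pair tendsto_const l0 l1 l2)
    have "(\<lambda>m. (\<lambda>(t,x,y,z). f t x y z) (t, T G (ph (r m)) t, T G1 (ph (r m)) t, T G2 (ph (r m)) t))
        \<longlonglongrightarrow> (\<lambda>(t,x,y,z). f t x y z) (t, T G g t, T G1 g t, T G2 g t)"
      by (rule continuous_on_tendsto_compose[OF fc lt inD[OF gadm t]]) (use inD[OF ph_adm t] in auto)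
    then have A: "(\<lambda>m. ps (r m) t) \<longlonglongrightarrow> Phi g t" by (simp add: ps_def Phi_def)
    have B: "(\<lambda>m. ps (r m) t) \<longlonglongrightarrow> g t"
    proof (rule LIMSEQ_I)
      fix e :: real assume "e > 0"
      then obtain N where "\<forall>n x. n \<ge> N \<and> x \<in> {0..1} \<longrightarrow> norm (ps (r n) x - g x) < e" using unif by blast
      then show "\<exists>N. \<forall>n\<ge>N. norm (ps (r n) t - g t) < e" using t by auto
    qed
    show ?thesis using LIMSEQ_unique[OF B A] .
  qed
  show ?thesis
  proof (intro exI conjI ballI)
    have s: "bvp_sol a1 b1 c1 a2 b2 c2 a3 b3 c3 g (T G g) (T G1 g) (T G2 g)" by (rule sol[OF gcont])
    show "bvp_sol a1 b1 c1 a2 b2 c2 a3 b3 c3 (\<lambda>t. f t (T G g t) (T G1 g t) (T G2 g t)) (T G g) (T G1 g) (T G2 g)"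
    proof -
      have "\<forall>t\<in>{0<..<1}. g t = f t (T G g t) (T G1 g t) (T G2 g t)"
        using fixg by (auto simp: Phi_def)
      then show ?thesis using s unfolding bvp_sol_def by auto
    qed
    fix t :: real assume t: "t \<in> {0..1}"
    show "\<bar>T G g t\<bar> \<le> M0 * M" "\<bar>T G1 g t\<bar> \<le> M1 * M" "\<bar>T G2 g t\<bar> \<le> M2 * M"
      using bnd[OF gadm t] by auto
  qed
qed

end
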